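(* Set $d^L=\beta\frac{v_0}{v_U}e^{-\mu a/v_0}g_0$, $d^U=\beta g_U\frac{v_U}{v_0}$, $Q=[d^L/\gamma,\,d^U/\gamma]$ and $R=\{\phi\in C^1:\phi([-r,0])\subset Q\}$. Then: (i) For all $\phi\in X_G$, $t_\phi=\infty$. (ii) For every neighbourhood $N$ of $Q$ in $\mathbb{R}$ and each $\phi\in X_G$ there exists $t(\phi,N)\in[0,\infty)$ with $x^\phi(t)\in N$ for all $t\ge t(\phi,N)$. (iii) If $\phi\in X_G\cap R$ then $x^\phi(t)\in Q$ for all $t\ge 0$. (iv) If $\phi\in X_G$ is strictly positive then $x^\phi(t)>0$ for all $t\ge -r$.
   Context: Constants $\beta,\mu,\gamma,a>0$. The function $g:\mathbb{R}\to(0,\infty)$ is continuously differentiable with $0<g_0:=\inf g(\mathbb{R})\le \sup g(\mathbb{R})=g_U<\infty$. The function $v:\mathbb{R}\to\mathbb{R}$ is continuously differentiable with $0<v_0\le v(x)\le v_U$ for all $x$. Fix $r>a/v_0$; $C=C([-r,0],\mathbb{R})$, $C^1=C^1([-r,0],\mathbb{R})$ with norm $|\phi|_1=\max|\phi|+\max|\phi'|$. Segments: $x_t(s)=x(t+s)$, $s\in[-r,0]$. For $\phi\in C$ let $\delta(\phi)$ be the unique $u\in(0,r)$ with $a=\int_{-u}^0 v(\phi(s))\,ds$. Define $G:C^1\to\mathbb{R}$ by $$G(\phi)=\beta e^{-\mu\delta(\phi)}\frac{v(\phi(0))}{v(\phi(-\delta(\phi)))}g(\phi(-\delta(\phi)))-\gamma\phi(0),$$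 and $X_G=\{\phi\in C^1:\phi'(0)=G(\phi)\}$. Each $\phi\in X_G$ determines a unique maximal continuously differentiable solution $x^\phi:[-r,t_\phi)\to\mathbb{R}$, $0<t_\phi\le\infty$, of $x'(t)=G(x_t)$ for $0<t<t_\phi$, $x_0=\phi$. *)

theory Defs
  imports "HOL-Analysis.Analysis"
begin

text \<open>Functions on [-r,0] are represented as total functions real => real;
only their values on [-r,0] matter.\<close>

definition C1_seg :: "real \<Rightarrow> (real \<Rightarrow> real) \<Rightarrow> bool" where
  "C1_seg r \<phi> \<longleftrightarrow> (\<exists>\<phi>'. (\<forall>s\<in>{-r..0}. (\<phi> has_real_derivative \<phi>' s) (at s within {-r..0}))
                       \<and> continuous_on {-r..0} \<phi>')"

definition delay :: "(real \<Rightarrow> real) \<Rightarrow> real \<Rightarrow> real \<Rightarrow> (real \<Rightarrow> real) \<Rightarrow> real" where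
  "delay v a r \<phi> = (THE u. u \<in> {0<..<r} \<and> a = integral {-u..0} (\<lambda>s. v (\<phi> s)))"

definition Gfun :: "real \<Rightarrow> real \<Rightarrow> real \<Rightarrow> real \<Rightarrow> (real \<Rightarrow> real) \<Rightarrow> (real \<Rightarrow> real) \<Rightarrow> real
                    \<Rightarrow> (real \<Rightarrow> real) \<Rightarrow> real" where
  "Gfun \<beta> \<mu> \<gamma> a g v r \<phi> =
     (let d = delay v a r \<phi> in
      \<beta> * exp (-\<mu> * d) * (v (\<phi> 0) / v (\<phi> (-d))) * g (\<phi> (-d)) - \<gamma> * \<phi> 0)"

definition XG :: "real \<Rightarrow> real \<Rightarrow> real \<Rightarrow> real \<Rightarrow> (real \<Rightarrow> real) \<Rightarrow> (real \<Rightarrow> real) \<Rightarrow> real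
                    \<Rightarrow> (real \<Rightarrow> real) set" where
  "XG \<beta> \<mu> \<gamma> a g v r = {\<phi>. C1_seg r \<phi> \<and>
      vector_derivative \<phi> (at 0 within {-r..0}) = Gfun \<beta> \<mu> \<gamma> a g v r \<phi>}"

definition is_sol :: "real \<Rightarrow> real \<Rightarrow> real \<Rightarrow> real \<Rightarrow> (real \<Rightarrow> real) \<Rightarrow> (real \<Rightarrow> real) \<Rightarrow> real
                    \<Rightarrow> (real \<Rightarrow> real) \<Rightarrow> ereal \<Rightarrow> (real \<Rightarrow> real) \<Rightarrow> bool" where
  "is_sol \<beta> \<mu> \<gamma> a g v r \<phi> T x \<longleftrightarrow>
     0 < T \<and>
     (\<exists>x'. (\<forall>t\<in>{s. -r \<le> s \<and> ereal s < T}.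
              (x has_real_derivative x' t) (at t within {s. -r \<le> s \<and> ereal s < T}))
          \<and> continuous_on {s. -r \<le> s \<and> ereal s < T} x') \<and>
     (\<forall>s\<in>{-r..0}. x s = \<phi> s) \<and>
     (\<forall>t. 0 < t \<and> ereal t < T \<longrightarrow>
          (x has_real_derivative Gfun \<beta> \<mu> \<gamma> a g v r (\<lambda>s. x (t + s))) (at t))"

definition max_sol :: "real \<Rightarrow> real \<Rightarrow> real \<Rightarrow> real \<Rightarrow> (real \<Rightarrow> real) \<Rightarrow> (real \<Rightarrow> real) \<Rightarrow> real
                    \<Rightarrow> (real \<Rightarrow> real) \<Rightarrow> ereal \<Rightarrow> (real \<Rightarrow> real) \<Rightarrow> bool" where
  "max_sol \<beta> \<mu> \<gamma> a g v r \<phi> T x \<longleftrightarrow>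
     is_sol \<beta> \<mu> \<gamma> a g v r \<phi> T x \<and>
     \<not> (\<exists>T' y. T < T' \<and> is_sol \<beta> \<mu> \<gamma> a g v r \<phi> T' y \<and>
               (\<forall>t. -r \<le> t \<and> ereal t < T \<longrightarrow> y t = x t))"

end

theory Submission
  imports Defs
begin

lemma antideriv_bounds:
  fixes W w :: "real \<Rightarrow> real"
  assumes pq: "p \<le> q" and d: "\<And>s. s \<in> {p..q} \<Longrightarrow> (W has_real_derivative w s) (at s within {p..q})"
    and b: "\<And>s. s \<in> {p..q} \<Longrightarrow> m \<le> w s \<and> w s \<le> M"
  shows "m*(q-p) \<le> W q - W p \<and> W q - W p \<le> M*(q-p)"
proof -
  have I: "(w has_integral (W q - W p)) {p..q}"
    using fundamental_theorem_of_calculus[of p q W w] pq d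
    by (simp add: has_real_derivative_iff_has_vector_derivative)
  have m: "((\<lambda>_. m) has_integral (m*(q-p))) {p..q}"
    using has_integral_const_real[of m p q] pq by (simp add: mult.commute)
  have M: "((\<lambda>_. M) has_integral (M*(q-p))) {p..q}"
    using has_integral_const_real[of M p q] pq by (simp add: mult.commute)
  show ?thesis
    using has_integral_le[OF m I] has_integral_le[OF I M] b by auto
qed

lemma ode_exist:
  fixes f :: "real \<Rightarrow> 'a::banach \<Rightarrow> 'a"
  assumes h: "0 < h" and L: "0 \<le> L" "h * L < 1"
    and lip: "\<And>t z w. t \<in> {t0..t0+h} \<Longrightarrow> norm (f t z - f t w) \<le> L * norm (z - w)"
    and cont: "\<And>u. continuous_on {t0..t0+h} u \<Longrightarrow> continuous_on {t0..t0+h} (\<lambda>s. f s (u s))"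
  obtains u where "u t0 = z0" "continuous_on {t0..t0+h} u"
    "\<And>t. t \<in> {t0..t0+h} \<Longrightarrow> (u has_vector_derivative f t (u t)) (at t within {t0..t0+h})"
proof -
  define I where "I = {t0..t0+h}"
  define cl where "cl t = max t0 (min (t0+h) t)" for t
  have clI: "cl t \<in> I" for t using h by (auto simp: cl_def I_def)
  have clid: "t \<in> I \<Longrightarrow> cl t = t" for t by (auto simp: cl_def I_def)
  have ccl: "continuous_on UNIV cl" unfolding cl_def by (intro continuous_intros)
  define G where "G u = (\<lambda>\<tau>. integral {t0..\<tau>} (\<lambda>s. f s (u s)))" for u :: "real \<Rightarrow> 'a"
  define F where "F u = (\<lambda>t. z0 + G u (cl t))" for u :: "real \<Rightarrow> 'a"
  have cG: "continuous_on I (G u)" if "continuous_on I u" for u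
    unfolding G_def I_def
    by (rule indefinite_integral_continuous_1, rule integrable_continuous_real)
       (use cont that I_def in auto)
  have Fb: "F (apply_bcontfun u) \<in> bcontfun" for u
  proof -
    have cu: "continuous_on I (apply_bcontfun u)" by simp
    have c1: "continuous_on UNIV (\<lambda>t. G u (cl t))"
      by (rule continuous_on_compose2[OF cG[OF cu] ccl]) (use clI in auto)
    have c2: "continuous_on UNIV (F u)" unfolding F_def by (intro continuous_intros c1)
    have "compact ((\<lambda>\<tau>. z0 + G u \<tau>) ` I)"
      by (rule compact_continuous_image) (use cG[OF cu] in \<open>auto simp: I_def intro!: continuous_intros\<close>)
    then have "bounded ((\<lambda>\<tau>. z0 + G u \<tau>) ` I)" by (rule compact_imp_bounded)
    moreover have "range (F u) \<subseteq> (\<lambda>\<tau>. z0 + G u \<tau>) ` I" using clI by (auto simp: F_def)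
    ultimately have "bounded (range (F u))" by (rule bounded_subset)
    with c2 show ?thesis by (simp add: bcontfun_def)
  qed
  define \<Phi> where "\<Phi> u = Bcontfun (F (apply_bcontfun u))" for u :: "real \<Rightarrow>\<^sub>C 'a"
  have \<Phi>app: "apply_bcontfun (\<Phi> u) = F u" for u
    unfolding \<Phi>_def using Fb by (simp add: Bcontfun_inverse)
  have contr: "dist (\<Phi> u) (\<Phi> w) \<le> (h*L) * dist u w" for u w
  proof (rule dist_bound)
    fix t
    have iu: "(\<lambda>s. f s (u s)) integrable_on {t0..cl t}"
      by (rule integrable_continuous_real, rule continuous_on_subset[OF cont])
         (use clI in \<open>auto simp: I_def\<close>)
    have iw: "(\<lambda>s. f s (w s)) integrable_on {t0..cl t}"
      by (rule integrable_continuous_real, rule continuous_on_subset[OF cont])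
         (use clI in \<open>auto simp: I_def\<close>)
    have "dist (\<Phi> u t) (\<Phi> w t) = norm (G u (cl t) - G w (cl t))"
      by (simp add: \<Phi>app F_def dist_norm)
    also have "G u (cl t) - G w (cl t) = integral {t0..cl t} (\<lambda>s. f s (u s) - f s (w s))"
      unfolding G_def by (simp add: integral_diff[OF iu iw])
    also have "norm \<dots> \<le> (L * dist u w) * measure lborel (cbox t0 (cl t))"
    proof (rule has_integral_bound)
      show "0 \<le> L * dist u w" using L by simp
      show "((\<lambda>s. f s (u s) - f s (w s)) has_integral integral {t0..cl t} (\<lambda>s. f s (u s) - f s (w s))) (cbox t0 (cl t))"
        using integrable_diff[OF iu iw] by (simp add: integrable_integral)
      fix s assume s: "s \<in> cbox t0 (cl t)"
      then have sI: "s \<in> {t0..t0+h}" using clI[of t] by (auto simp: I_def)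
      have "norm (f s (u s) - f s (w s)) \<le> L * norm (u s - w s)" by (rule lip[OF sI])
      also have "\<dots> \<le> L * dist u w" using L dist_bounded[of u s w] by (simp add: dist_norm mult_left_mono)
      finally show "norm (f s (u s) - f s (w s)) \<le> L * dist u w" .
    qed
    also have "measure lborel (cbox t0 (cl t)) \<le> h" using clI[of t] by (auto simp: I_def)
    then have "(L * dist u w) * measure lborel (cbox t0 (cl t)) \<le> (L * dist u w) * h"
      using L by (intro mult_left_mono) auto
    finally show "dist (\<Phi> u t) (\<Phi> w t) \<le> h * L * dist u w" by (simp add: algebra_simps)
  qed
  obtain u where fxp: "\<Phi> u = u"
    using banach_fix_type[of "h*L" \<Phi>] L h contr by (auto simp: mult_nonneg_nonneg)
  have ueq: "apply_bcontfun u t = F u t" for t using fxp \<Phi>app by metis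
  show ?thesis
  proof
    show "apply_bcontfun u t0 = z0" using ueq[of t0] clid[of t0] h by (simp add: F_def G_def I_def)
    show "continuous_on {t0..t0+h} (apply_bcontfun u)" by simp
    fix t assume t: "t \<in> {t0..t0+h}"
    have "((\<lambda>\<tau>. z0 + G u \<tau>) has_vector_derivative f t (u t)) (at t within {t0..t0+h})"
    proof -
      have "((\<lambda>\<tau>. integral {t0..\<tau>} (\<lambda>s. f s (u s))) has_vector_derivative f t (u t)) (at t within {t0..t0+h})"
        by (rule integral_has_vector_derivative[OF cont t]) simp
      then show ?thesis unfolding G_def
        using has_vector_derivative_add[OF has_vector_derivative_const[of z0]] by fastforce
    qed
    then show "(apply_bcontfun u has_vector_derivative f t (u t)) (at t within {t0..t0+h})"
      by (rule has_vector_derivative_transform[OF t, rotated]) (simp add: ueq F_def clid I_def)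
  qed
qed

locale sdde =
  fixes \<beta> \<mu> \<gamma> a r v\<^sub>0 v\<^sub>U :: real and g g' v v' :: "real \<Rightarrow> real"
  assumes bpos: "\<beta> > 0" and mupos: "\<mu> > 0" and gpos: "\<gamma> > 0" and apos: "a > 0"
    and gder: "\<And>y. (g has_real_derivative g' y) (at y)" and g'c: "continuous_on UNIV g'"
    and gp: "\<And>y. g y > 0" and gbdd: "bdd_above (range g)" and ginf: "Inf (range g) > 0"
    and vder: "\<And>y. (v has_real_derivative v' y) (at y)" and v'c: "continuous_on UNIV v'"
    and v0pos: "v\<^sub>0 > 0" and vb: "\<And>y. v\<^sub>0 \<le> v y \<and> v y \<le> v\<^sub>U"
    and rbig: "r > a / v\<^sub>0"
begin

lemma vpos: "v y > 0" using vb[of y] v0pos by linarith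
lemma vUpos: "v\<^sub>U > 0" using vb[of 0] v0pos by linarith
lemma v0U: "v\<^sub>0 \<le> v\<^sub>U" using vb[of 0] by linarith
lemma rpos: "r > 0" using rbig apos v0pos by (smt (verit) divide_pos_pos)
lemma av0r: "a / v\<^sub>0 < r" using rbig by simp

lemma vcont: "continuous_on S v"
  by (meson DERIV_continuous_on vder DERIV_subset subset_UNIV)
lemma gcont: "continuous_on S g"
  by (meson DERIV_continuous_on gder DERIV_subset subset_UNIV)

lemma V_bounds:
  assumes dV: "\<And>s. s \<in> {c..d} \<Longrightarrow> (V has_real_derivative v (z s)) (at s within {c..d})"
    and "c \<le> p" "p \<le> q" "q \<le> d"
  shows "v\<^sub>0*(q-p) \<le> V q - V p \<and> V q - V p \<le> v\<^sub>U*(q-p)"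
proof (rule antideriv_bounds[where w="\<lambda>s. v (z s)"])
  fix s assume s: "s \<in> {p..q}"
  show "(V has_real_derivative v (z s)) (at s within {p..q})"
  proof (rule DERIV_subset)
    show "(V has_real_derivative v (z s)) (at s within {c..d})" using dV[of s] assms s by auto
  qed (use assms in auto)
  show "v\<^sub>0 \<le> v (z s) \<and> v (z s) \<le> v\<^sub>U" by (rule vb)
qed (use assms in auto)

lemma delay_integral:
  assumes dV: "\<And>s. s \<in> {t-r..t} \<Longrightarrow> (V has_real_derivative v (z s)) (at s within {t-r..t})"
    and u: "0 \<le> u" "u \<le> r"
  shows "integral {-u..0} (\<lambda>s. v (z (t+s))) = V t - V (t-u)"
proof -
  have "((\<lambda>s. v (z (t+s))) has_integral ((V \<circ> (\<lambda>s. t+s)) 0 - (V \<circ> (\<lambda>s. t+s)) (-u))) {-u..0}"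
  proof (rule fundamental_theorem_of_calculus)
    show "-u \<le> 0" using u by simp
    fix s assume s: "s \<in> {-u..0}"
    have d1: "((\<lambda>s. t+s) has_vector_derivative 1) (at s within {-u..0})"
      by (auto intro!: derivative_eq_intros)
    have img: "(\<lambda>s. t+s) ` {-u..0} = {t-u..t}"
      using image_add_atLeastAtMost[of t "-u" 0] by simp
    have "(V has_real_derivative v (z (t+s))) (at (t+s) within {t-r..t})"
      using dV[of "t+s"] s u by auto
    then have "(V has_vector_derivative v (z (t+s))) (at (t+s) within (\<lambda>s. t+s) ` {-u..0})"
      unfolding img has_real_derivative_iff_has_vector_derivative[symmetric]
      by (rule DERIV_subset) (use u in auto)
    from vector_diff_chain_within[OF d1 this]
    show "((V \<circ> (\<lambda>s. t+s)) has_vector_derivative v (z (t+s))) (at s within {-u..0})" by simp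
  qed
  then show ?thesis by (simp add: integral_unique)
qed

lemma delay_unique:
  assumes dV: "\<And>s. s \<in> {t-r..t} \<Longrightarrow> (V has_real_derivative v (z s)) (at s within {t-r..t})"
    and u: "0 < u" "u < r" "V t - V (t-u) = a"
  shows "delay v a r (\<lambda>s. z (t+s)) = u"
  unfolding delay_def
proof (rule the_equality)
  show "u \<in> {0<..<r} \<and> a = integral {- u..0} (\<lambda>s. v (z (t + s)))"
    using u delay_integral[OF dV, of u] by auto
  fix w assume w: "w \<in> {0<..<r} \<and> a = integral {- w..0} (\<lambda>s. v (z (t + s)))"
  then have wa: "V t - V (t-w) = a" using delay_integral[OF dV, of w] by auto
  show "w = u"
  proof (rule ccontr)
    assume "w \<noteq> u"
    then consider "w < u" | "u < w" by linarith
    then show False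
    proof cases
      case 1
      then have "v\<^sub>0*((t-w)-(t-u)) \<le> V (t-w) - V (t-u)"
        using V_bounds[OF dV, of "t-u" "t-w"] u w by auto
      moreover have "v\<^sub>0*((t-w)-(t-u)) > 0" using 1 v0pos by simp
      ultimately show False using wa u by linarith
    next
      case 2
      then have "v\<^sub>0*((t-u)-(t-w)) \<le> V (t-u) - V (t-w)"
        using V_bounds[OF dV, of "t-w" "t-u"] u w by auto
      moreover have "v\<^sub>0*((t-u)-(t-w)) > 0" using 2 v0pos by simp
      ultimately show False using wa u by linarith
    qed
  qed
qed

lemma delay_props:
  assumes dV: "\<And>s. s \<in> {t-r..t} \<Longrightarrow> (V has_real_derivative v (z s)) (at s within {t-r..t})"
  defines "d \<equiv> delay v a r (\<lambda>s. z (t+s))"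
  shows "0 < d \<and> d < r \<and> a/v\<^sub>U \<le> d \<and> d \<le> a/v\<^sub>0 \<and> V t - V (t-d) = a"
proof -
  have cV: "continuous_on {t-r..t} V" by (rule DERIV_continuous_on[OF dV])
  define f where "f u = V t - V (t-u)" for u
  have cf: "continuous_on {0..a/v\<^sub>0} f" unfolding f_def
    by (intro continuous_intros continuous_on_compose2[OF cV]) (use av0r in auto)
  have f0: "f 0 \<le> a" using apos by (simp add: f_def)
  have fa: "a \<le> f (a/v\<^sub>0)"
    using V_bounds[OF dV, of "t - a/v\<^sub>0" t] av0r v0pos apos by (auto simp: f_def)
  obtain u where u: "0 \<le> u" "u \<le> a/v\<^sub>0" "f u = a"
    using IVT'[of f 0 a "a/v\<^sub>0", OF f0 fa _ cf] apos v0pos by auto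
  have u0: "u \<noteq> 0" using u apos by (auto simp: f_def)
  have ur: "u < r" using u av0r by linarith
  have dU: "d = u" unfolding d_def
    by (rule delay_unique[OF dV]) (use u u0 ur f_def in auto)
  have "a \<le> v\<^sub>U * u"
    using V_bounds[OF dV, of "t-u" t] u ur by (auto simp: f_def)
  then have "a/v\<^sub>U \<le> u" using vUpos by (simp add: field_simps)
  then show ?thesis using dU u u0 ur f_def by auto
qed

end

context sdde begin

definition "g\<^sub>0 = Inf (range g)"
definition "g\<^sub>U = Sup (range g)"
definition "dL = \<beta> * (v\<^sub>0 / v\<^sub>U) * exp (-\<mu> * a / v\<^sub>0) * g\<^sub>0"
definition "dU = \<beta> * g\<^sub>U * (v\<^sub>U / v\<^sub>0)"

definition Pf :: "(real \<Rightarrow> real) \<Rightarrow> real" where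
  "Pf \<psi> = (let d = delay v a r \<psi> in \<beta> * exp (-\<mu> * d) * (v (\<psi> 0) / v (\<psi> (-d))) * g (\<psi> (-d)))"

lemma Gfun_Pf: "Gfun \<beta> \<mu> \<gamma> a g v r \<psi> = Pf \<psi> - \<gamma> * \<psi> 0"
  by (simp add: Gfun_def Pf_def Let_def)

lemma g_bounds: "g\<^sub>0 \<le> g y \<and> g y \<le> g\<^sub>U"
proof
  have "bdd_below (range g)" using gp by (metis bdd_belowI2 less_imp_le)
  then show "g\<^sub>0 \<le> g y" unfolding g\<^sub>0_def by (rule cInf_lower[rotated]) simp
  show "g y \<le> g\<^sub>U" unfolding g\<^sub>U_def using gbdd by (rule cSup_upper[rotated]) simp
qed

lemma g0pos: "g\<^sub>0 > 0" using ginf by (simp add: g\<^sub>0_def)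

lemma dLpos: "dL > 0" unfolding dL_def using bpos v0pos vUpos g0pos by simp
lemma dLU: "dL \<le> dU"
proof -
  have "exp (-\<mu> * a / v\<^sub>0) \<le> 1" using mupos apos v0pos by (simp add: divide_nonneg_pos)
  have "v\<^sub>0 / v\<^sub>U \<le> 1" using v0U vUpos by simp
  have "1 \<le> v\<^sub>U / v\<^sub>0" using v0U v0pos by simp
  have "g\<^sub>0 \<le> g\<^sub>U" using g_bounds[of 0] by linarith
  have "(v\<^sub>0 / v\<^sub>U) * exp (-\<mu> * a / v\<^sub>0) * g\<^sub>0 \<le> 1 * 1 * g\<^sub>U"
    by (intro mult_mono) (use \<open>exp (-\<mu> * a / v\<^sub>0) \<le> 1\<close> \<open>v\<^sub>0 / v\<^sub>U \<le> 1\<close> \<open>g\<^sub>0 \<le> g\<^sub>U\<close> g0pos v0pos vUpos in auto)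
  also have "\<dots> \<le> g\<^sub>U * (v\<^sub>U / v\<^sub>0)" using \<open>1 \<le> v\<^sub>U / v\<^sub>0\<close> g_bounds[of 0] g0pos
    using mult_left_mono[OF \<open>1 \<le> v\<^sub>U / v\<^sub>0\<close>, of g\<^sub>U] by simp
  finally have H: "(v\<^sub>0 / v\<^sub>U) * exp (-\<mu> * a / v\<^sub>0) * g\<^sub>0 \<le> g\<^sub>U * (v\<^sub>U / v\<^sub>0)" .
  show ?thesis unfolding dL_def dU_def using mult_left_mono[OF H, of \<beta>] bpos
    by (simp only: mult.assoc)
qed

lemma P_bounds:
  assumes "0 \<le> delay v a r \<psi>" "delay v a r \<psi> \<le> a/v\<^sub>0"
  shows "dL \<le> Pf \<psi> \<and> Pf \<psi> \<le> dU"
proof -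
  define d where "d = delay v a r \<psi>"
  have e1: "exp (-\<mu> * a / v\<^sub>0) \<le> exp (-\<mu> * d)"
    using mult_left_mono[OF assms(2), of \<mu>] mupos unfolding d_def by simp
  have e2: "exp (-\<mu> * d) \<le> 1" using assms mupos unfolding d_def by simp
  have q1: "v\<^sub>0 / v\<^sub>U \<le> v (\<psi> 0) / v (\<psi> (-d))"
    using vb[of "\<psi> 0"] vb[of "\<psi> (-d)"] v0pos by (intro frac_le) auto
  have q2: "v (\<psi> 0) / v (\<psi> (-d)) \<le> v\<^sub>U / v\<^sub>0"
    using vb[of "\<psi> 0"] vb[of "\<psi> (-d)"] v0pos vpos by (intro frac_le) auto
  have "(v\<^sub>0 / v\<^sub>U) * exp (-\<mu> * a / v\<^sub>0) * g\<^sub>0 \<le> (v (\<psi> 0) / v (\<psi> (-d))) * exp (-\<mu> * d) * g (\<psi> (-d))"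
    by (intro mult_mono e1 q1 g_bounds[THEN conjunct1])
       (use v0pos vUpos vpos g0pos in \<open>auto intro!: divide_nonneg_pos mult_nonneg_nonneg less_imp_le\<close>)
  then have L: "dL \<le> Pf \<psi>" unfolding dL_def Pf_def d_def[symmetric] Let_def using bpos
    by (metis (no_types, lifting) mult.assoc mult.commute mult_le_cancel_left_pos)
  have "(v (\<psi> 0) / v (\<psi> (-d))) * exp (-\<mu> * d) * g (\<psi> (-d)) \<le> (v\<^sub>U / v\<^sub>0) * 1 * g\<^sub>U"
    by (intro mult_mono e2 q2 g_bounds[THEN conjunct2]) (use v0pos vUpos vpos gp in \<open>auto intro: less_imp_le\<close>)
  then have U: "Pf \<psi> \<le> dU" unfolding dU_def Pf_def d_def[symmetric] Let_def using bpos
    by (metis (no_types, lifting) mult.assoc mult.commute mult_le_cancel_left_pos mult_1)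
  from L U show ?thesis ..
qed

lemma seg_delay:
  assumes cx: "continuous_on {-r..b} x" and t: "0 \<le> t" "t \<le> b"
  defines "V \<equiv> (\<lambda>s. integral {-r..s} (\<lambda>\<tau>. v (x \<tau>)))"
  shows "\<And>s. s \<in> {t-r..t} \<Longrightarrow> (V has_real_derivative v (x s)) (at s within {t-r..t})"
    and "let d = delay v a r (\<lambda>s. x (t+s)) in 0 < d \<and> d < r \<and> a/v\<^sub>U \<le> d \<and> d \<le> a/v\<^sub>0 \<and> V t - V (t-d) = a"
proof -
  have cvx: "continuous_on {-r..b} (\<lambda>\<tau>. v (x \<tau>))" by (rule continuous_on_compose2[OF vcont cx]) auto
  show dV: "(V has_real_derivative v (x s)) (at s within {t-r..t})" if "s \<in> {t-r..t}" for s
  proof (rule DERIV_subset)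
    show "(V has_real_derivative v (x s)) (at s within {-r..b})"
      unfolding V_def by (rule integral_has_real_derivative[OF cvx]) (use that t in auto)
  qed (use t in auto)
  show "let d = delay v a r (\<lambda>s. x (t+s)) in 0 < d \<and> d < r \<and> a/v\<^sub>U \<le> d \<and> d \<le> a/v\<^sub>0 \<and> V t - V (t-d) = a"
    using delay_props[OF dV] by (simp add: Let_def)
qed

end

context sdde begin

lemma ereal_lt: "s \<le> b \<Longrightarrow> ereal b < T \<Longrightarrow> ereal s < T"
  by (meson ereal_less_eq(3) order.strict_trans1)

abbreviation "SS T \<equiv> {s. -r \<le> s \<and> ereal s < T}"

lemma sol_unpack:
  assumes "is_sol \<beta> \<mu> \<gamma> a g v r \<phi> T x"
  obtains xd where "0 < T"
    "\<And>t. t \<in> SS T \<Longrightarrow> (x has_real_derivative xd t) (at t within SS T)"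
    "continuous_on (SS T) xd" "\<And>s. s\<in>{-r..0} \<Longrightarrow> x s = \<phi> s"
    "\<And>t. 0 < t \<Longrightarrow> ereal t < T \<Longrightarrow> (x has_real_derivative Gfun \<beta> \<mu> \<gamma> a g v r (\<lambda>s. x (t+s))) (at t)"
  using assms unfolding is_sol_def by blast

lemma sol_eq:
  assumes "is_sol \<beta> \<mu> \<gamma> a g v r \<phi> T x" "0 < t" "ereal t < T"
  shows "(x has_real_derivative Gfun \<beta> \<mu> \<gamma> a g v r (\<lambda>s. x (t+s))) (at t)"
  using assms unfolding is_sol_def by blast

lemma sol_der:
  assumes "is_sol \<beta> \<mu> \<gamma> a g v r \<phi> T x"
  shows "\<exists>xd. (\<forall>t \<in> SS T. (x has_real_derivative xd t) (at t within SS T)) \<and> continuous_on (SS T) xd"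
  using assms unfolding is_sol_def by blast

lemma sol_cont:
  assumes "is_sol \<beta> \<mu> \<gamma> a g v r \<phi> T x" "ereal b < T"
  shows "continuous_on {-r..b} x"
proof -
  obtain xd where "\<And>t. t \<in> SS T \<Longrightarrow> (x has_real_derivative xd t) (at t within SS T)"
    using sol_der[OF assms(1)] by blast
  then have "continuous_on (SS T) x" by (rule DERIV_continuous_on)
  moreover have "{-r..b} \<subseteq> SS T" using assms(2) by (auto intro: ereal_lt)
  ultimately show ?thesis by (rule continuous_on_subset)
qed

lemma sol_P:
  assumes "is_sol \<beta> \<mu> \<gamma> a g v r \<phi> T x" "0 \<le> t" "ereal t < T"
  shows "dL \<le> Pf (\<lambda>s. x (t+s)) \<and> Pf (\<lambda>s. x (t+s)) \<le> dU"
proof -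
  have "let d = delay v a r (\<lambda>s. x (t+s)) in 0 < d \<and> d < r \<and> a/v\<^sub>U \<le> d \<and> d \<le> a/v\<^sub>0 \<and> True"
    using seg_delay(2)[OF sol_cont[OF assms(1,3)] assms(2) order_refl] by (simp add: Let_def)
  then show ?thesis by (intro P_bounds) (auto simp: Let_def)
qed

lemma formula:
  assumes sol: "is_sol \<beta> \<mu> \<gamma> a g v r \<phi> T x" and t: "0 \<le> t" "ereal t < T"
  shows "dL*(exp(\<gamma>*t)-1)/\<gamma> \<le> exp(\<gamma>*t)*x t - x 0 \<and> exp(\<gamma>*t)*x t - x 0 \<le> dU*(exp(\<gamma>*t)-1)/\<gamma>"
proof -
  have xder: "(x has_real_derivative Pf (\<lambda>\<tau>. x (s+\<tau>)) - \<gamma> * x s) (at s)" if "0 < s" "ereal s < T" for s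
    using sol_eq[OF sol that] by (simp add: Gfun_Pf)
  have cx: "continuous_on {0..t} x"
    using sol_cont[OF sol t(2)] by (rule continuous_on_subset) (use rpos in auto)
  have st: "ereal s < T" if "s \<le> t" for s using that t(2) by (rule ereal_lt)
  have "(\<lambda>s. exp(\<gamma> * s)*x s - dL*exp(\<gamma> * s)/\<gamma>) 0 \<le> (\<lambda>s. exp(\<gamma> * s)*x s - dL*exp(\<gamma> * s)/\<gamma>) t"
  proof (rule DERIV_nonneg_imp_increasing_open[OF t(1)])
    fix s assume s: "0 < s" "s < t"
    have "((\<lambda>s. exp(\<gamma> * s)*x s - dL*exp(\<gamma> * s)/\<gamma>) has_real_derivative
        (exp(\<gamma> * s)*\<gamma>*x s + exp(\<gamma> * s)*(Pf (\<lambda>\<tau>. x (s+\<tau>)) - \<gamma> * x s) - dL*(exp(\<gamma> * s)*\<gamma>)/\<gamma>)) (at s)"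
      using xder[OF s(1) st] s by (auto intro!: derivative_eq_intros)
    moreover have "exp(\<gamma> * s)*\<gamma>*x s + exp(\<gamma> * s)*(Pf (\<lambda>\<tau>. x (s+\<tau>)) - \<gamma> * x s) - dL*(exp(\<gamma> * s)*\<gamma>)/\<gamma>
        = exp(\<gamma> * s) * (Pf (\<lambda>\<tau>. x (s+\<tau>)) - dL)" using gpos by (simp add: algebra_simps)
    moreover have "Pf (\<lambda>\<tau>. x (s+\<tau>)) - dL \<ge> 0" using sol_P[OF sol, of s] s st by auto
    ultimately show "\<exists>y. ((\<lambda>s. exp(\<gamma> * s)*x s - dL*exp(\<gamma> * s)/\<gamma>) has_real_derivative y) (at s) \<and> 0 \<le> y"
      by auto
  next
    show "continuous_on {0..t} (\<lambda>s. exp(\<gamma> * s)*x s - dL*exp(\<gamma> * s)/\<gamma>)"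
      using gpos by (intro continuous_intros cx) auto
  qed
  then have A: "dL*(exp(\<gamma>*t)-1)/\<gamma> \<le> exp(\<gamma>*t)*x t - x 0" by (simp add: diff_divide_distrib algebra_simps)
  have "(\<lambda>s. dU*exp(\<gamma> * s)/\<gamma> - exp(\<gamma> * s)*x s) 0 \<le> (\<lambda>s. dU*exp(\<gamma> * s)/\<gamma> - exp(\<gamma> * s)*x s) t"
  proof (rule DERIV_nonneg_imp_increasing_open[OF t(1)])
    fix s assume s: "0 < s" "s < t"
    have "((\<lambda>s. dU*exp(\<gamma> * s)/\<gamma> - exp(\<gamma> * s)*x s) has_real_derivative
        (dU*(exp(\<gamma> * s)*\<gamma>)/\<gamma> - (exp(\<gamma> * s)*\<gamma>*x s + exp(\<gamma> * s)*(Pf (\<lambda>\<tau>. x (s+\<tau>)) - \<gamma> * x s)))) (at s)"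
      using xder[OF s(1) st] s by (auto intro!: derivative_eq_intros)
    moreover have "dU*(exp(\<gamma> * s)*\<gamma>)/\<gamma> - (exp(\<gamma> * s)*\<gamma>*x s + exp(\<gamma> * s)*(Pf (\<lambda>\<tau>. x (s+\<tau>)) - \<gamma> * x s))
        = exp(\<gamma> * s) * (dU - Pf (\<lambda>\<tau>. x (s+\<tau>)))" using gpos by (simp add: algebra_simps)
    moreover have "dU - Pf (\<lambda>\<tau>. x (s+\<tau>)) \<ge> 0" using sol_P[OF sol, of s] s st by auto
    ultimately show "\<exists>y. ((\<lambda>s. dU*exp(\<gamma> * s)/\<gamma> - exp(\<gamma> * s)*x s) has_real_derivative y) (at s) \<and> 0 \<le> y"
      by auto
  next
    show "continuous_on {0..t} (\<lambda>s. dU*exp(\<gamma> * s)/\<gamma> - exp(\<gamma> * s)*x s)"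
      using gpos by (intro continuous_intros cx) auto
  qed
  then have B: "exp(\<gamma>*t)*x t - x 0 \<le> dU*(exp(\<gamma>*t)-1)/\<gamma>" by (simp add: diff_divide_distrib algebra_simps)
  from A B show ?thesis ..
qed

end

lemma cont_bound:
  fixes f :: "real \<Rightarrow> real"
  assumes "continuous_on {c..d} f"
  obtains K where "K \<ge> 0" "\<And>t. t \<in> {c..d} \<Longrightarrow> \<bar>f t\<bar> \<le> K"
proof -
  have "compact (f ` {c..d})" by (rule compact_continuous_image[OF assms]) simp
  then have "bounded (f ` {c..d})" by (rule compact_imp_bounded)
  then obtain K where "\<And>y. y \<in> f ` {c..d} \<Longrightarrow> norm y \<le> K" by (auto simp: bounded_iff)
  then have "\<And>t. t \<in> {c..d} \<Longrightarrow> \<bar>f t\<bar> \<le> max K 0" by fastforce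
  then show ?thesis using that[of "max K 0"] by auto
qed

lemma loc_lip:
  fixes F F' :: "real \<Rightarrow> real"
  assumes d: "\<And>y. (F has_real_derivative F' y) (at y)" and c: "continuous_on UNIV F'"
  obtains L where "L \<ge> 0" "\<And>y1 y2. y1 \<in> {c..d} \<Longrightarrow> y2 \<in> {c..d} \<Longrightarrow> \<bar>F y1 - F y2\<bar> \<le> L * \<bar>y1 - y2\<bar>"
proof -
  obtain B where B: "B \<ge> 0" "\<And>t. t \<in> {c..d} \<Longrightarrow> \<bar>F' t\<bar> \<le> B"
    using cont_bound[OF continuous_on_subset[OF c subset_UNIV, of "{c..d}"]] by blast
  have le: "\<bar>F q - F p\<bar> \<le> B * (q - p)" if "p \<in> {c..d}" "q \<in> {c..d}" "p \<le> q" for p q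
  proof -
    have "(-B)*(q-p) \<le> F q - F p \<and> F q - F p \<le> B*(q-p)"
    proof (rule antideriv_bounds[OF \<open>p \<le> q\<close>])
      fix s assume s: "s \<in> {p..q}"
      show "(F has_real_derivative F' s) (at s within {p..q})"
        by (rule has_field_derivative_at_within[OF d])
      show "- B \<le> F' s \<and> F' s \<le> B" using B(2)[of s] s that by auto
    qed
    then show ?thesis by auto
  qed
  show ?thesis
  proof (rule that[OF B(1)])
    fix y1 y2 assume y: "y1 \<in> {c..d}" "y2 \<in> {c..d}"
    show "\<bar>F y1 - F y2\<bar> \<le> B * \<bar>y1 - y2\<bar>"
    proof (cases "y1 \<le> y2")
      case True then show ?thesis using le[of y1 y2] y by (simp add: abs_minus_commute)
    next
      case False then show ?thesis using le[of y2 y1] y by simp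
    qed
  qed
qed

lemma prod_lip:
  fixes A1 A2 B1 B2 :: real
  assumes "\<bar>A1\<bar> \<le> MA" "\<bar>B2\<bar> \<le> MB"
  shows "\<bar>A1*B1 - A2*B2\<bar> \<le> MA*\<bar>B1-B2\<bar> + MB*\<bar>A1-A2\<bar>"
proof -
  have "A1*B1 - A2*B2 = A1*(B1-B2) + B2*(A1-A2)" by (simp add: algebra_simps)
  then have "\<bar>A1*B1 - A2*B2\<bar> \<le> \<bar>A1\<bar>*\<bar>B1-B2\<bar> + \<bar>B2\<bar>*\<bar>A1-A2\<bar>" by (simp add: abs_mult[symmetric] abs_triangle_ineq)
  also have "\<dots> \<le> MA*\<bar>B1-B2\<bar> + MB*\<bar>A1-A2\<bar>"
    by (intro add_mono mult_right_mono assms) auto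
  finally show ?thesis .
qed

lemma quot_lip:
  fixes p1 p2 w1 w2 :: real
  assumes "0 < m" "m \<le> w1" "m \<le> w2" "\<bar>p2\<bar> \<le> M"
  shows "\<bar>p1/w1 - p2/w2\<bar> \<le> \<bar>p1-p2\<bar>/m + M*\<bar>w1-w2\<bar>/(m*m)"
proof -
  have w: "w1 > 0" "w2 > 0" using assms by auto
  have "p1/w1 - p2/w2 = (p1-p2)/w1 + p2*(w2-w1)/(w1*w2)" using w by (simp add: field_simps)
  then have "\<bar>p1/w1 - p2/w2\<bar> \<le> \<bar>p1-p2\<bar>/w1 + \<bar>p2\<bar>*\<bar>w2-w1\<bar>/(w1*w2)"
    using w by (simp add: abs_mult abs_triangle_ineq order_trans[OF abs_triangle_ineq])
  also have "\<bar>p1-p2\<bar>/w1 \<le> \<bar>p1-p2\<bar>/m" using assms w by (intro divide_left_mono) auto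
  also have "\<bar>p2\<bar>*\<bar>w2-w1\<bar>/(w1*w2) \<le> M*\<bar>w1-w2\<bar>/(m*m)"
    using assms w by (intro frac_le mult_mono) (auto simp: abs_minus_commute)
  finally show ?thesis by simp
qed

lemma clamp_lip: "\<bar>max (c::real) (min d y1) - max c (min d y2)\<bar> \<le> \<bar>y1 - y2\<bar>"
  by (simp add: max_def min_def abs_if)

lemma norm_pair_le: "norm ((p, q)::real\<times>real) \<le> \<bar>p\<bar> + \<bar>q\<bar>"
proof -
  have "norm ((p, q)::real\<times>real) = norm ((p,0) + (0,q))" by simp
  also have "\<dots> \<le> norm ((p,0)::real\<times>real) + norm ((0,q)::real\<times>real)" by (rule norm_triangle_ineq)
  finally show ?thesis by (simp add: norm_Pair)
qed

lemma deriv_union: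
  assumes "(f has_real_derivative D) (at x within A)" "(f has_real_derivative D) (at x within B)"
  shows "(f has_real_derivative D) (at x within (A \<union> B))"
  using assms by (simp add: has_field_derivative_iff Lim_within_Un)

context sdde begin

lemma Gfun_cong:
  assumes "\<And>s. s \<in> {-r..0} \<Longrightarrow> \<psi>1 s = \<psi>2 s" "0 \<le> delay v a r \<psi>1" "delay v a r \<psi>1 \<le> r"
  shows "Gfun \<beta> \<mu> \<gamma> a g v r \<psi>1 = Gfun \<beta> \<mu> \<gamma> a g v r \<psi>2"
proof -
  have "delay v a r \<psi>1 = delay v a r \<psi>2"
    unfolding delay_def
  proof (rule arg_cong[where f=The], rule ext)
    fix u
    show "(u \<in> {0<..<r} \<and> a = integral {- u..0} (\<lambda>s. v (\<psi>1 s))) = (u \<in> {0<..<r} \<and> a = integral {- u..0} (\<lambda>s. v (\<psi>2 s)))"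
    proof (cases "u \<in> {0<..<r}")
      case True
      then have "integral {- u..0} (\<lambda>s. v (\<psi>1 s)) = integral {- u..0} (\<lambda>s. v (\<psi>2 s))"
        by (intro integral_cong) (use assms(1) in auto)
      then show ?thesis by simp
    qed auto
  qed
  moreover have "\<psi>1 0 = \<psi>2 0" using assms(1) rpos by simp
  moreover have "\<psi>1 (- delay v a r \<psi>1) = \<psi>2 (- delay v a r \<psi>1)" using assms by simp
  ultimately show ?thesis by (simp add: Gfun_def Let_def)
qed

end

locale sdde_ext = sdde +
  fixes \<phi> x and T0 :: real
  assumes sol: "is_sol \<beta> \<mu> \<gamma> a g v r \<phi> (ereal T0) x"
begin

abbreviation "S \<equiv> {-r..<T0}"

lemma T0pos: "T0 > 0" using sol by (simp add: is_sol_def)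
lemma SSeq: "SS (ereal T0) = S" by auto
lemma rT0: "-r < T0" using T0pos rpos by linarith

lemma ex_xd: "\<exists>xd. (\<forall>t \<in> S. (x has_real_derivative xd t) (at t within S)) \<and> continuous_on S xd"
  using sol_der[OF sol] by (simp only: SSeq)

definition "xd = (SOME xd. (\<forall>t \<in> S. (x has_real_derivative xd t) (at t within S)) \<and> continuous_on S xd)"

lemma xd_der: "t \<in> S \<Longrightarrow> (x has_real_derivative xd t) (at t within S)"
  and xd_cont: "continuous_on S xd"
  using someI_ex[OF ex_xd] unfolding xd_def[symmetric] by auto

lemma x_cont: "continuous_on S x" using xd_der by (rule DERIV_continuous_on)

lemma xd_eq: assumes "0 < t" "t < T0" shows "xd t = Pf (\<lambda>s. x (t+s)) - \<gamma> * x t"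
proof -
  have "at t within S = at t" by (rule at_within_interior) (use assms rpos in auto)
  then have "(x has_real_derivative xd t) (at t)" using xd_der[of t] assms rpos by auto
  moreover have "(x has_real_derivative Gfun \<beta> \<mu> \<gamma> a g v r (\<lambda>s. x (t+s))) (at t)"
    using sol_eq[OF sol assms(1)] assms by simp
  ultimately show ?thesis by (simp add: DERIV_unique Gfun_Pf)
qed

lemma x_bounded: obtains Mx where "Mx \<ge> 0" "\<And>t. t \<in> S \<Longrightarrow> \<bar>x t\<bar> \<le> Mx"
proof -
  have sub: "{-r..0} \<subseteq> S" using T0pos by auto
  obtain M1 where M1: "M1 \<ge> 0" "\<And>t. t \<in> {-r..0} \<Longrightarrow> \<bar>x t\<bar> \<le> M1"
    by (rule cont_bound[OF continuous_on_subset[OF x_cont sub]]) blast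
  have "\<bar>x t\<bar> \<le> \<bar>x 0\<bar> + dU/\<gamma>" if t: "0 \<le> t" "t < T0" for t
  proof -
    have F: "dL*(exp(\<gamma>*t)-1)/\<gamma> \<le> exp(\<gamma>*t)*x t - x 0 \<and> exp(\<gamma>*t)*x t - x 0 \<le> dU*(exp(\<gamma>*t)-1)/\<gamma>"
      using formula[OF sol t(1)] t by simp
    have e1: "exp(\<gamma>*t) \<ge> 1" using t gpos by simp
    have dLg: "dL/\<gamma> \<ge> 0" "dU/\<gamma> \<ge> 0" using dLpos dLU gpos by auto
    define e where "e = exp(\<gamma>*t)"
    have e1': "e \<ge> 1" using e1 by (simp add: e_def)
    have A: "0 \<le> \<bar>x 0\<bar> * (e - 1)" by (rule mult_nonneg_nonneg) (use e1' in auto)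
    have B: "0 \<le> (dL/\<gamma>) * (e - 1)" by (rule mult_nonneg_nonneg) (use e1' dLg in auto)
    have F1: "e*x t \<le> x 0 + (dU/\<gamma>)*(e-1)" using F by (simp add: field_simps e_def)
    have F2: "x 0 + (dL/\<gamma>)*(e-1) \<le> e*x t" using F by (simp add: field_simps e_def)
    have E1: "(\<bar>x 0\<bar> + dU/\<gamma>)*e = \<bar>x 0\<bar>*(e-1) + \<bar>x 0\<bar> + (dU/\<gamma>)*(e-1) + dU/\<gamma>"
      using gpos by (simp add: field_simps)
    have "e*x t \<le> (\<bar>x 0\<bar> + dU/\<gamma>) * e" using F1 E1 A dLg abs_ge_self[of "x 0"] by linarith
    then have up: "x t \<le> \<bar>x 0\<bar> + dU/\<gamma>" using e1' by (simp add: mult.commute)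
    have E2: "(-\<bar>x 0\<bar>)*e = -(\<bar>x 0\<bar>*(e-1)) - \<bar>x 0\<bar>" by (simp add: algebra_simps)
    have "(-\<bar>x 0\<bar>)*e \<le> e*x t" using F2 E2 A B abs_ge_minus_self[of "x 0"] by linarith
    then have "0 \<le> e * (x t + \<bar>x 0\<bar>)" by (simp add: algebra_simps)
    then have lo: "-\<bar>x 0\<bar> \<le> x t" using e1' by (simp add: zero_le_mult_iff)
    show ?thesis using up lo dLg by linarith
  qed
  then have "\<bar>x t\<bar> \<le> max M1 (\<bar>x 0\<bar> + dU/\<gamma>)" if "t \<in> S" for t
  proof (cases "t \<le> 0")
    case True then show ?thesis using M1(2)[of t] that by (simp add: le_max_iff_disj)
  next
    case False then show ?thesis using \<open>\<And>t. 0 \<le> t \<Longrightarrow> t < T0 \<Longrightarrow> _\<close>[of t] that by (simp add: le_max_iff_disj)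
  qed
  then show ?thesis using that[of "max M1 (\<bar>x 0\<bar> + dU/\<gamma>)"] M1 by auto
qed

lemma xd_bounded: obtains K where "K \<ge> 0" "\<And>t. t \<in> S \<Longrightarrow> \<bar>xd t\<bar> \<le> K"
proof -
  have sub: "{-r..0} \<subseteq> S" using T0pos by auto
  obtain M1 where M1: "M1 \<ge> 0" "\<And>t. t \<in> {-r..0} \<Longrightarrow> \<bar>xd t\<bar> \<le> M1"
    by (rule cont_bound[OF continuous_on_subset[OF xd_cont sub]]) blast
  obtain Mx where Mx: "Mx \<ge> 0" "\<And>t. t \<in> S \<Longrightarrow> \<bar>x t\<bar> \<le> Mx" by (rule x_bounded) blast
  have "\<bar>xd t\<bar> \<le> dU + \<gamma> * Mx" if t: "0 < t" "t < T0" for t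
  proof -
    have P: "dL \<le> Pf (\<lambda>s. x (t+s)) \<and> Pf (\<lambda>s. x (t+s)) \<le> dU" using sol_P[OF sol, of t] t by simp
    have "\<bar>\<gamma> * x t\<bar> \<le> \<gamma> * Mx" using Mx(2)[of t] t rpos gpos by (simp add: abs_mult)
    then show ?thesis using xd_eq[OF t] P dLpos by linarith
  qed
  then have "\<bar>xd t\<bar> \<le> max M1 (dU + \<gamma> * Mx)" if "t \<in> S" for t
  proof (cases "t \<le> 0")
    case True then show ?thesis using M1(2)[of t] that by (simp add: le_max_iff_disj)
  next
    case False then show ?thesis using \<open>\<And>t. 0 < t \<Longrightarrow> t < T0 \<Longrightarrow> _\<close>[of t] that by (simp add: le_max_iff_disj)
  qed
  then show ?thesis using that[of "max M1 (dU + \<gamma> * Mx)"] M1 by auto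
qed

definition "K = (SOME K. K \<ge> 0 \<and> (\<forall>t \<in> S. \<bar>xd t\<bar> \<le> K))"
lemma K_ex: "\<exists>K. K \<ge> 0 \<and> (\<forall>t \<in> S. \<bar>xd t\<bar> \<le> K)"
proof -
  obtain K where "K \<ge> 0" "\<And>t. t \<in> S \<Longrightarrow> \<bar>xd t\<bar> \<le> K" by (rule xd_bounded) blast
  then show ?thesis by blast
qed
lemma K: "K \<ge> 0" "t \<in> S \<Longrightarrow> \<bar>xd t\<bar> \<le> K"
  using someI_ex[OF K_ex] unfolding K_def[symmetric] by auto

lemma x_lip: assumes "p \<in> S" "q \<in> S" shows "\<bar>x p - x q\<bar> \<le> K * \<bar>p - q\<bar>"
proof -
  have le: "\<bar>x q - x p\<bar> \<le> K * (q - p)" if "p \<in> S" "q \<in> S" "p \<le> q" for p q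
  proof -
    have "(-K)*(q-p) \<le> x q - x p \<and> x q - x p \<le> K*(q-p)"
    proof (rule antideriv_bounds[OF \<open>p \<le> q\<close>])
      fix s assume s: "s \<in> {p..q}"
      show "(x has_real_derivative xd s) (at s within {p..q})"
        by (rule DERIV_subset[OF xd_der]) (use s that in auto)
      show "- K \<le> xd s \<and> xd s \<le> K" using K(2)[of s] s that by auto
    qed
    then show ?thesis by auto
  qed
  show ?thesis
  proof (cases "p \<le> q")
    case True then show ?thesis using le[of p q] assms by (simp add: abs_minus_commute)
  next
    case False then show ?thesis using le[of q p] assms by simp
  qed
qed

lemma ex_xe: "\<exists>xe. continuous_on {-r..T0} xe \<and> (\<forall>t\<in>S. xe t = x t)"
proof -
  have "uniformly_continuous_on S x"
    unfolding uniformly_continuous_on_def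
  proof (intro allI impI)
    fix e :: real assume e: "e > 0"
    show "\<exists>d>0. \<forall>p\<in>S. \<forall>q\<in>S. dist q p < d \<longrightarrow> dist (x q) (x p) < e"
    proof (intro exI[of _ "e/(K+1)"] conjI ballI impI)
      show "e/(K+1) > 0" using e K(1) by simp
      fix p q assume pq: "p \<in> S" "q \<in> S" "dist q p < e/(K+1)"
      have "dist (x q) (x p) \<le> K * dist q p" using x_lip[OF pq(2,1)] by (simp add: dist_real_def)
      also have "\<dots> \<le> (K+1) * dist q p" by (simp add: distrib_right)
      also have "\<dots> < (K+1) * (e/(K+1))" using pq(3) K(1) by (intro mult_strict_left_mono) auto
      also have "\<dots> = e" using K(1) by simp
      finally show "dist (x q) (x p) < e" .
    qed
  qed
  then obtain xe where "uniformly_continuous_on (closure S) xe" "\<And>t. t \<in> S \<Longrightarrow> x t = xe t"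
    by (rule uniformly_continuous_on_extension_on_closure) blast
  then show ?thesis using rT0
    by (intro exI[of _ xe]) (auto intro: uniformly_continuous_imp_continuous)
qed

definition "xe = (SOME xe. continuous_on {-r..T0} xe \<and> (\<forall>t\<in>S. xe t = x t))"
lemma xe_cont: "continuous_on {-r..T0} xe" and xe_eq: "t \<in> S \<Longrightarrow> xe t = x t"
  using someI_ex[OF ex_xe] unfolding xe_def[symmetric] by auto

definition "V s = integral {-r..s} (\<lambda>\<tau>. v (xe \<tau>))"

lemma V_der: "s \<in> {-r..T0} \<Longrightarrow> (V has_real_derivative v (xe s)) (at s within {-r..T0})"
  unfolding V_def[abs_def]
  by (rule integral_has_real_derivative) (auto intro: continuous_on_compose2[OF vcont xe_cont])

lemma V_cont: "continuous_on {-r..T0} V" using V_der by (rule DERIV_continuous_on)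

lemma V_mono: "-r \<le> p \<Longrightarrow> p \<le> q \<Longrightarrow> q \<le> T0 \<Longrightarrow> v\<^sub>0*(q-p) \<le> V q - V p \<and> V q - V p \<le> v\<^sub>U*(q-p)"
  by (rule V_bounds[where z=xe, OF V_der])

lemma dV_seg: assumes "0 \<le> t" "t < T0" "s \<in> {t-r..t}"
  shows "(V has_real_derivative v (x s)) (at s within {t-r..t})"
proof -
  have "(V has_real_derivative v (xe s)) (at s within {t-r..t})"
    by (rule DERIV_subset[OF V_der]) (use assms in auto)
  then show ?thesis using xe_eq[of s] assms by auto
qed

definition "\<theta> t = t - delay v a r (\<lambda>s. x (t+s))"

lemma theta_props: assumes "0 \<le> t" "t < T0"
  shows "t - a/v\<^sub>0 \<le> \<theta> t \<and> \<theta> t \<le> t - a/v\<^sub>U \<and> V t - V (\<theta> t) = a \<and> -r < \<theta> t \<and> \<theta> t < t"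
  using delay_props[OF dV_seg[OF assms]] assms unfolding \<theta>_def by auto

lemma theta_lip: assumes "t1 \<in> {0..<T0}" "t2 \<in> {0..<T0}" "t1 \<le> t2"
  shows "0 \<le> \<theta> t2 - \<theta> t1 \<and> \<theta> t2 - \<theta> t1 \<le> (v\<^sub>U/v\<^sub>0) * (t2 - t1)"
proof -
  have p1: "t1 - a/v\<^sub>0 \<le> \<theta> t1 \<and> \<theta> t1 \<le> t1 - a/v\<^sub>U \<and> V t1 - V (\<theta> t1) = a \<and> -r < \<theta> t1 \<and> \<theta> t1 < t1"
    using theta_props assms by auto
  have p2: "t2 - a/v\<^sub>0 \<le> \<theta> t2 \<and> \<theta> t2 \<le> t2 - a/v\<^sub>U \<and> V t2 - V (\<theta> t2) = a \<and> -r < \<theta> t2 \<and> \<theta> t2 < t2"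
    using theta_props assms by auto
  have eq: "V (\<theta> t2) - V (\<theta> t1) = V t2 - V t1" using p1 p2 by linarith
  have Vt: "V t2 - V t1 \<le> v\<^sub>U*(t2-t1)" using V_mono[of t1 t2] assms rpos by auto
  have mono: "\<theta> t1 \<le> \<theta> t2"
  proof (rule ccontr)
    assume "\<not> ?thesis"
    then have "v\<^sub>0*(\<theta> t1 - \<theta> t2) \<le> V (\<theta> t1) - V (\<theta> t2)"
      using V_mono[of "\<theta> t2" "\<theta> t1"] p1 p2 assms by auto
    moreover have "v\<^sub>0*(\<theta> t1 - \<theta> t2) > 0" using \<open>\<not> _\<close> v0pos by simp
    moreover have "v\<^sub>0*(t2-t1) \<ge> 0" using v0pos assms by simp
    moreover have "V t2 - V t1 \<ge> v\<^sub>0*(t2-t1)" using V_mono[of t1 t2] assms rpos by auto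
    ultimately show False using eq by linarith
  qed
  have "v\<^sub>0*(\<theta> t2 - \<theta> t1) \<le> V (\<theta> t2) - V (\<theta> t1)"
    using V_mono[of "\<theta> t1" "\<theta> t2"] p1 p2 assms mono by auto
  then have "v\<^sub>0*(\<theta> t2 - \<theta> t1) \<le> v\<^sub>U*(t2-t1)" using eq Vt by linarith
  then have "\<theta> t2 - \<theta> t1 \<le> (v\<^sub>U*(t2-t1))/v\<^sub>0" using v0pos by (simp add: field_simps)
  then show ?thesis using mono by simp
qed

end

context sdde_ext begin

lemma ex_thetae: "\<exists>th. continuous_on {0..T0} th \<and> (\<forall>t\<in>{0..<T0}. th t = \<theta> t)"
proof -
  have lip: "\<bar>\<theta> p - \<theta> q\<bar> \<le> (v\<^sub>U/v\<^sub>0) * \<bar>p - q\<bar>" if "p \<in> {0..<T0}" "q \<in> {0..<T0}" for p q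
  proof (cases "p \<le> q")
    case True then show ?thesis using theta_lip[of p q] that by (simp add: abs_minus_commute)
  next
    case False then show ?thesis using theta_lip[of q p] that by simp
  qed
  have c: "v\<^sub>U/v\<^sub>0 \<ge> 0" using vUpos v0pos by simp
  have "uniformly_continuous_on {0..<T0} \<theta>"
    unfolding uniformly_continuous_on_def
  proof (intro allI impI)
    fix e :: real assume e: "e > 0"
    show "\<exists>d>0. \<forall>p\<in>{0..<T0}. \<forall>q\<in>{0..<T0}. dist q p < d \<longrightarrow> dist (\<theta> q) (\<theta> p) < e"
    proof (intro exI[of _ "e/(v\<^sub>U/v\<^sub>0+1)"] conjI ballI impI)
      show "e/(v\<^sub>U/v\<^sub>0+1) > 0" using e c by simp
      fix p q assume pq: "p \<in> {0..<T0}" "q \<in> {0..<T0}" "dist q p < e/(v\<^sub>U/v\<^sub>0+1)"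
      have "dist (\<theta> q) (\<theta> p) \<le> (v\<^sub>U/v\<^sub>0) * dist q p" using lip[OF pq(2,1)] by (simp add: dist_real_def)
      also have "\<dots> \<le> (v\<^sub>U/v\<^sub>0+1) * dist q p" by (simp add: distrib_right)
      also have "\<dots> < (v\<^sub>U/v\<^sub>0+1) * (e/(v\<^sub>U/v\<^sub>0+1))" using pq(3) c by (intro mult_strict_left_mono) auto
      also have "\<dots> = e" using c by simp
      finally show "dist (\<theta> q) (\<theta> p) < e" .
    qed
  qed
  then obtain th where "uniformly_continuous_on (closure {0..<T0}) th" "\<And>t. t \<in> {0..<T0} \<Longrightarrow> \<theta> t = th t"
    by (rule uniformly_continuous_on_extension_on_closure) blast
  then show ?thesis using T0pos
    by (intro exI[of _ th]) (auto intro: uniformly_continuous_imp_continuous)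
qed

definition "\<theta>e = (SOME th. continuous_on {0..T0} th \<and> (\<forall>t\<in>{0..<T0}. th t = \<theta> t))"
lemma thetae_cont: "continuous_on {0..T0} \<theta>e" and thetae_eq: "t \<in> {0..<T0} \<Longrightarrow> \<theta>e t = \<theta> t"
  using someI_ex[OF ex_thetae] unfolding \<theta>e_def[symmetric] by auto

lemma thetae_bounds: assumes "t \<in> {0..T0}" shows "t - a/v\<^sub>0 \<le> \<theta>e t \<and> \<theta>e t \<le> t - a/v\<^sub>U"
proof -
  have cl: "closure {0..<T0} = {0..T0}" using T0pos by simp
  have c: "continuous_on (closure {0..<T0}) (\<lambda>t. \<theta>e t - t)" unfolding cl
    by (intro continuous_intros thetae_cont)
  have t: "t \<in> closure {0..<T0}" using assms cl by simp
  have h: "\<theta>e s - s \<ge> - (a/v\<^sub>0) \<and> \<theta>e s - s \<le> - (a/v\<^sub>U)" if s: "s \<in> {0..<T0}" for s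
  proof -
    have "\<theta>e s = \<theta> s" using thetae_eq s by blast
    moreover have "s - a/v\<^sub>0 \<le> \<theta> s \<and> \<theta> s \<le> s - a/v\<^sub>U" using theta_props[of s] s by auto
    ultimately show ?thesis by linarith
  qed
  have "\<theta>e t - t \<le> - (a/v\<^sub>U)"
    by (rule continuous_le_on_closure[OF c t]) (use h in blast)
  moreover have "\<theta>e t - t \<ge> - (a/v\<^sub>0)"
    by (rule continuous_ge_on_closure[OF c t]) (use h in blast)
  ultimately show ?thesis by simp
qed

lemma thetae_range: assumes "t \<in> {0..T0}" shows "\<theta>e t \<in> {-r..T0}"
proof -
  have "a/v\<^sub>U \<ge> 0" using apos vUpos by simp
  then show ?thesis using thetae_bounds[OF assms] assms av0r by auto
qed

definition "\<Theta>0 = \<theta>e T0"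
definition "x0 = xe T0"

lemma Theta0_bounds: "T0 - a/v\<^sub>0 \<le> \<Theta>0 \<and> \<Theta>0 \<le> T0 - a/v\<^sub>U"
  unfolding \<Theta>0_def using thetae_bounds[of T0] T0pos by auto

lemma Theta0_V: "V T0 - V \<Theta>0 = a"
proof -
  have cl: "closure {0..<T0} = {0..T0}" using T0pos by simp
  have cV0: "continuous_on {0..T0} V" by (rule continuous_on_subset[OF V_cont]) (use rpos in auto)
  have cVth: "continuous_on {0..T0} (\<lambda>t. V (\<theta>e t))"
    by (rule continuous_on_compose2[OF V_cont thetae_cont]) (use thetae_range in auto)
  have c: "continuous_on (closure {0..<T0}) (\<lambda>t. V t - V (\<theta>e t))" unfolding cl
    by (intro continuous_intros cV0 cVth)
  have "V T0 - V (\<theta>e T0) = a"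
  proof (rule continuous_constant_on_closure[OF c])
    fix s assume s: "s \<in> {0..<T0}"
    have "\<theta>e s = \<theta> s" using thetae_eq s by blast
    then show "V s - V (\<theta>e s) = a" using theta_props[of s] s by auto
  qed (use T0pos in auto)
  then show ?thesis by (simp add: \<Theta>0_def)
qed

definition "H t = \<beta> * exp (-\<mu> * (t - \<theta>e t)) * (v (xe t) / v (xe (\<theta>e t))) * g (xe (\<theta>e t)) - \<gamma> * xe t"

lemma H_cont: "continuous_on {0..T0} H"
proof -
  have c1: "continuous_on {0..T0} (\<lambda>t. xe (\<theta>e t))"
    by (rule continuous_on_compose2[OF xe_cont thetae_cont]) (use thetae_range in auto)
  have c2: "continuous_on {0..T0} xe" by (rule continuous_on_subset[OF xe_cont]) (use rpos in auto)
  show ?thesis unfolding H_def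
    by (intro continuous_intros thetae_cont continuous_on_compose2[OF vcont c1] continuous_on_compose2[OF gcont c1]
          continuous_on_compose2[OF vcont c2] c2) (auto simp: vpos less_imp_neq[OF vpos, symmetric])
qed

lemma xd_H: assumes "0 < t" "t < T0" shows "xd t = H t"
proof -
  have tp: "t - a/v\<^sub>0 \<le> \<theta> t \<and> \<theta> t \<le> t - a/v\<^sub>U \<and> V t - V (\<theta> t) = a \<and> -r < \<theta> t \<and> \<theta> t < t"
    using theta_props assms by auto
  have d: "delay v a r (\<lambda>s. x (t+s)) = t - \<theta> t" by (simp add: \<theta>_def)
  have e1: "xe t = x t" using xe_eq assms rpos by auto
  have e2: "xe (\<theta> t) = x (\<theta> t)" using xe_eq tp assms by auto
  have e3: "\<theta>e t = \<theta> t" using thetae_eq assms by auto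
  show ?thesis unfolding xd_eq[OF assms] Pf_def H_def Let_def d e3 e1 e2 by simp
qed

definition "T1 = T0/2"

lemma xe_left_der: "(xe has_real_derivative H T0) (at T0 within {T1..T0})"
proof -
  have T1: "0 < T1" "T1 < T0" using T0pos by (auto simp: T1_def)
  have Hc: "continuous_on {T1..T0} H" by (rule continuous_on_subset[OF H_cont]) (use T1 in auto)
  have rep: "xe t - integral {T1..t} H = xe T1" if t: "t \<in> {T1..<T0}" for t
  proof -
    have "(H has_integral (x t - x T1)) {T1..t}"
    proof (rule fundamental_theorem_of_calculus[of T1 t x H, unfolded has_real_derivative_iff_has_vector_derivative[symmetric]])
      show "T1 \<le> t" using t by simp
      fix s assume s: "s \<in> {T1..t}"
      have "(x has_real_derivative xd s) (at s within {T1..t})"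
        by (rule DERIV_subset[OF xd_der]) (use s t T1 rpos in auto)
      then show "(x has_real_derivative H s) (at s within {T1..t})" using xd_H[of s] s t T1 by auto
    qed
    then have "integral {T1..t} H = x t - x T1" by (rule integral_unique)
    moreover have "xe t = x t" "xe T1 = x T1" using xe_eq t T1 rpos by auto
    ultimately show ?thesis by simp
  qed
  have cl: "closure {T1..<T0} = {T1..T0}" using T1 by simp
  have c1: "continuous_on {T1..T0} xe" by (rule continuous_on_subset[OF xe_cont]) (use T1 rpos in auto)
  have c2: "continuous_on {T1..T0} (\<lambda>t. integral {T1..t} H)"
    by (rule indefinite_integral_continuous_1[OF integrable_continuous_real[OF Hc]])
  have c: "continuous_on (closure {T1..<T0}) (\<lambda>t. xe t - integral {T1..t} H)" unfolding cl
    using c1 c2 by (rule continuous_on_diff)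
  have eq: "xe t = xe T1 + integral {T1..t} H" if "t \<in> {T1..T0}" for t
    using continuous_constant_on_closure[OF c rep, of t] that cl by simp
  have d1: "((\<lambda>t. integral {T1..t} H) has_real_derivative H T0) (at T0 within {T1..T0})"
    by (rule integral_has_real_derivative[OF Hc]) (use T1 in auto)
  have "((\<lambda>t. xe T1 + integral {T1..t} H) has_real_derivative H T0) (at T0 within {T1..T0})"
    using DERIV_add[OF DERIV_const d1] by simp
  then show ?thesis
    unfolding has_real_derivative_iff_has_vector_derivative
  proof (rule has_vector_derivative_transform[rotated 2])
    show "T0 \<in> {T1..T0}" using T1 by auto
    fix t assume "t \<in> {T1..T0}" then show "xe t = xe T1 + integral {T1..t} H" by (rule eq)
  qed
qed

end

lemma vd_fst: "(u has_vector_derivative w) F \<Longrightarrow> ((\<lambda>t. fst (u t)) has_real_derivative fst w) F"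
  unfolding has_real_derivative_iff_has_vector_derivative has_vector_derivative_def
  by (drule has_derivative_fst) (simp add: scaleR_prod_def)

lemma vd_snd: "(u has_vector_derivative w) F \<Longrightarrow> ((\<lambda>t. snd (u t)) has_real_derivative snd w) F"
  unfolding has_real_derivative_iff_has_vector_derivative has_vector_derivative_def
  by (drule has_derivative_snd) (simp add: scaleR_prod_def)

context sdde_ext begin

definition "\<alpha>1 = T0 - a/v\<^sub>0"
definition "\<alpha>2 = T0 - a/(2* v\<^sub>U)"

lemma alphas: "-r < \<alpha>1" "\<alpha>1 \<le> \<alpha>2" "\<alpha>2 < T0" "\<alpha>2 = T0 - a/v\<^sub>U + a/(2* v\<^sub>U)"
proof -
  show "-r < \<alpha>1" using av0r T0pos by (simp add: \<alpha>1_def)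
  have "a/(2* v\<^sub>U) \<le> a/v\<^sub>0" using apos v0pos v0U by (intro divide_left_mono) auto
  then show "\<alpha>1 \<le> \<alpha>2" by (simp add: \<alpha>1_def \<alpha>2_def)
  show "\<alpha>2 < T0" using apos vUpos by (simp add: \<alpha>2_def)
  show "\<alpha>2 = T0 - a/v\<^sub>U + a/(2* v\<^sub>U)" by (simp add: \<alpha>2_def field_simps)
qed

definition "cth y = max \<alpha>1 (min \<alpha>2 y)"
definition "cX y = max (x0 - 1) (min (x0 + 1) y)"

lemma cth_range: "cth y \<in> {\<alpha>1..\<alpha>2}" using alphas by (auto simp: cth_def)
lemma cth_S: "cth y \<in> S" using cth_range[of y] alphas by auto
lemma cX_range: "cX y \<in> {x0-1..x0+1}" by (auto simp: cX_def)
lemma cth_id: "y \<in> {\<alpha>1..\<alpha>2} \<Longrightarrow> cth y = y" by (auto simp: cth_def)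
lemma cX_id: "y \<in> {x0-1..x0+1} \<Longrightarrow> cX y = y" by (auto simp: cX_def)
lemma cth_lip: "\<bar>cth y1 - cth y2\<bar> \<le> \<bar>y1 - y2\<bar>" unfolding cth_def by (rule clamp_lip)
lemma cX_lip: "\<bar>cX y1 - cX y2\<bar> \<le> \<bar>y1 - y2\<bar>" unfolding cX_def by (rule clamp_lip)
lemma cth_cont: "continuous_on A cth" unfolding cth_def by (intro continuous_intros)
lemma cX_cont: "continuous_on A cX" unfolding cX_def by (intro continuous_intros)

lemma Mx_ex: "\<exists>M. M \<ge> 0 \<and> (\<forall>t\<in>{-r..T0}. \<bar>xe t\<bar> \<le> M)"
proof -
  obtain M where "M \<ge> 0" "\<And>t. t \<in> {-r..T0} \<Longrightarrow> \<bar>xe t\<bar> \<le> M" by (rule cont_bound[OF xe_cont]) blast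
  then show ?thesis by blast
qed
definition "Mx = (SOME M. M \<ge> 0 \<and> (\<forall>t\<in>{-r..T0}. \<bar>xe t\<bar> \<le> M))"
lemma Mx: "Mx \<ge> 0" "t \<in> {-r..T0} \<Longrightarrow> \<bar>xe t\<bar> \<le> Mx"
  using someI_ex[OF Mx_ex] unfolding Mx_def[symmetric] by auto

lemma x0_le: "\<bar>x0\<bar> \<le> Mx" using Mx(2)[of T0] rT0 by (simp add: x0_def)

definition "Lv = (SOME L. L \<ge> 0 \<and> (\<forall>y1\<in>{-(Mx+1)..Mx+1}. \<forall>y2\<in>{-(Mx+1)..Mx+1}. \<bar>v y1 - v y2\<bar> \<le> L * \<bar>y1 - y2\<bar>))"
definition "Lg = (SOME L. L \<ge> 0 \<and> (\<forall>y1\<in>{-(Mx+1)..Mx+1}. \<forall>y2\<in>{-(Mx+1)..Mx+1}. \<bar>g y1 - g y2\<bar> \<le> L * \<bar>y1 - y2\<bar>))"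
definition "Le = (SOME L. L \<ge> 0 \<and> (\<forall>y1\<in>{-(\<mu>*(T0+1-\<alpha>1))..0}. \<forall>y2\<in>{-(\<mu>*(T0+1-\<alpha>1))..0}. \<bar>exp y1 - exp y2\<bar> \<le> L * \<bar>y1 - y2\<bar>))"

lemma Lv: "Lv \<ge> 0" "y1 \<in> {-(Mx+1)..Mx+1} \<Longrightarrow> y2 \<in> {-(Mx+1)..Mx+1} \<Longrightarrow> \<bar>v y1 - v y2\<bar> \<le> Lv * \<bar>y1 - y2\<bar>"
proof -
  obtain L where "L \<ge> 0" "\<And>y1 y2. y1 \<in> {-(Mx+1)..Mx+1} \<Longrightarrow> y2 \<in> {-(Mx+1)..Mx+1} \<Longrightarrow> \<bar>v y1 - v y2\<bar> \<le> L * \<bar>y1 - y2\<bar>"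
    by (rule loc_lip[OF vder v'c]) blast
  then have ex: "\<exists>L. L \<ge> 0 \<and> (\<forall>y1\<in>{-(Mx+1)..Mx+1}. \<forall>y2\<in>{-(Mx+1)..Mx+1}. \<bar>v y1 - v y2\<bar> \<le> L * \<bar>y1 - y2\<bar>)" by blast
  show "Lv \<ge> 0" "y1 \<in> {-(Mx+1)..Mx+1} \<Longrightarrow> y2 \<in> {-(Mx+1)..Mx+1} \<Longrightarrow> \<bar>v y1 - v y2\<bar> \<le> Lv * \<bar>y1 - y2\<bar>"
    using someI_ex[OF ex] unfolding Lv_def[symmetric] by auto
qed

lemma Lg: "Lg \<ge> 0" "y1 \<in> {-(Mx+1)..Mx+1} \<Longrightarrow> y2 \<in> {-(Mx+1)..Mx+1} \<Longrightarrow> \<bar>g y1 - g y2\<bar> \<le> Lg * \<bar>y1 - y2\<bar>"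
proof -
  obtain L where "L \<ge> 0" "\<And>y1 y2. y1 \<in> {-(Mx+1)..Mx+1} \<Longrightarrow> y2 \<in> {-(Mx+1)..Mx+1} \<Longrightarrow> \<bar>g y1 - g y2\<bar> \<le> L * \<bar>y1 - y2\<bar>"
    by (rule loc_lip[OF gder g'c]) blast
  then have ex: "\<exists>L. L \<ge> 0 \<and> (\<forall>y1\<in>{-(Mx+1)..Mx+1}. \<forall>y2\<in>{-(Mx+1)..Mx+1}. \<bar>g y1 - g y2\<bar> \<le> L * \<bar>y1 - y2\<bar>)" by blast
  show "Lg \<ge> 0" "y1 \<in> {-(Mx+1)..Mx+1} \<Longrightarrow> y2 \<in> {-(Mx+1)..Mx+1} \<Longrightarrow> \<bar>g y1 - g y2\<bar> \<le> Lg * \<bar>y1 - y2\<bar>"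
    using someI_ex[OF ex] unfolding Lg_def[symmetric] by auto
qed

lemma Le: "Le \<ge> 0" "y1 \<in> {-(\<mu>*(T0+1-\<alpha>1))..0} \<Longrightarrow> y2 \<in> {-(\<mu>*(T0+1-\<alpha>1))..0} \<Longrightarrow> \<bar>exp y1 - exp y2\<bar> \<le> Le * \<bar>y1 - y2\<bar>"
proof -
  have d: "\<And>y. (exp has_real_derivative exp y) (at y)" by (rule DERIV_exp)
  have c: "continuous_on UNIV (\<lambda>y::real. exp y)" by (intro continuous_intros)
  obtain L where "L \<ge> 0" "\<And>y1 y2. y1 \<in> {-(\<mu>*(T0+1-\<alpha>1))..0} \<Longrightarrow> y2 \<in> {-(\<mu>*(T0+1-\<alpha>1))..0} \<Longrightarrow> \<bar>exp y1 - exp y2\<bar> \<le> L * \<bar>y1 - y2\<bar>"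
    by (rule loc_lip[OF d c]) blast
  then have ex: "\<exists>L. L \<ge> 0 \<and> (\<forall>y1\<in>{-(\<mu>*(T0+1-\<alpha>1))..0}. \<forall>y2\<in>{-(\<mu>*(T0+1-\<alpha>1))..0}. \<bar>exp y1 - exp y2\<bar> \<le> L * \<bar>y1 - y2\<bar>)" by blast
  show "Le \<ge> 0" "y1 \<in> {-(\<mu>*(T0+1-\<alpha>1))..0} \<Longrightarrow> y2 \<in> {-(\<mu>*(T0+1-\<alpha>1))..0} \<Longrightarrow> \<bar>exp y1 - exp y2\<bar> \<le> Le * \<bar>y1 - y2\<bar>"
    using someI_ex[OF ex] unfolding Le_def[symmetric] by auto
qed

definition "qf z = v (cX (fst z)) / v (xe (cth (snd z)))"
definition "Ef t z = exp (-\<mu> * (t - cth (snd z)))"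
definition "Gf z = g (xe (cth (snd z)))"
definition "f t z = (\<beta> * (Ef t z * qf z * Gf z) - \<gamma> * cX (fst z), qf z)"

definition "Lq = Lv / v\<^sub>0 + v\<^sub>U * (Lv * K) / (v\<^sub>0 * v\<^sub>0)"
definition "L = \<beta> * ((v\<^sub>U/v\<^sub>0) * (Lg * K) + g\<^sub>U * (Lq + (v\<^sub>U/v\<^sub>0) * (Le * \<mu>))) + \<gamma> + Lq"
definition "Bf = \<beta> * ((v\<^sub>U/v\<^sub>0) * g\<^sub>U) + \<gamma> * (Mx + 1)"

lemma xe_cth: "xe (cth y) = x (cth y)" using xe_eq cth_S by blast
lemma xe_cth_range: "xe (cth y) \<in> {-(Mx+1)..Mx+1}"
  using Mx(2)[of "cth y"] cth_S[of y] by auto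
lemma cX_range2: "cX y \<in> {-(Mx+1)..Mx+1}" using cX_range[of y] x0_le by auto

lemma qf_bound: "\<bar>qf z\<bar> \<le> v\<^sub>U/v\<^sub>0"
proof -
  have "v (cX (fst z)) / v (xe (cth (snd z))) \<le> v\<^sub>U/v\<^sub>0"
    using vb[of "cX (fst z)"] vb[of "xe (cth (snd z))"] v0pos by (intro frac_le) auto
  moreover have "v (cX (fst z)) / v (xe (cth (snd z))) \<ge> 0" using vpos by (simp add: less_imp_le)
  ultimately show ?thesis by (simp add: qf_def)
qed

lemma qf_range: "v\<^sub>0/v\<^sub>U \<le> qf z \<and> qf z \<le> v\<^sub>U/v\<^sub>0"
proof
  show "v\<^sub>0/v\<^sub>U \<le> qf z" unfolding qf_def
    using vb[of "cX (fst z)"] vb[of "xe (cth (snd z))"] v0pos by (intro frac_le) auto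
  show "qf z \<le> v\<^sub>U/v\<^sub>0" using qf_bound[of z] by auto
qed

lemma Gf_bound: "\<bar>Gf z\<bar> \<le> g\<^sub>U" using g_bounds gp by (simp add: Gf_def less_imp_le)

lemma Ef_bound: assumes "t \<ge> T0" shows "\<bar>Ef t z\<bar> \<le> 1"
proof -
  have "cth (snd z) \<le> t" using cth_range[of "snd z"] alphas assms by auto
  then show ?thesis using mupos by (simp add: Ef_def mult_nonneg_nonneg)
qed

lemma f_bound: assumes "t \<ge> T0" shows "\<bar>fst (f t z)\<bar> \<le> Bf"
proof -
  have "\<bar>Ef t z * qf z * Gf z\<bar> \<le> 1 * (v\<^sub>U/v\<^sub>0) * g\<^sub>U"
    unfolding abs_mult by (intro mult_mono Ef_bound[OF assms] qf_bound Gf_bound) (use v0pos vUpos in auto)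
  then have Y: "\<bar>Ef t z * qf z * Gf z\<bar> \<le> (v\<^sub>U/v\<^sub>0) * g\<^sub>U" by simp
  have 1: "\<bar>\<beta> * (Ef t z * qf z * Gf z)\<bar> \<le> \<beta> * ((v\<^sub>U/v\<^sub>0) * g\<^sub>U)"
  proof -
    have "\<bar>\<beta> * (Ef t z * qf z * Gf z)\<bar> = \<beta> * \<bar>Ef t z * qf z * Gf z\<bar>"
      using bpos by (simp only: abs_mult abs_of_pos)
    also have "\<dots> \<le> \<beta> * ((v\<^sub>U/v\<^sub>0) * g\<^sub>U)" using Y bpos by (intro mult_left_mono) auto
    finally show ?thesis .
  qed
  have "\<bar>cX (fst z)\<bar> \<le> Mx + 1" using cX_range2[of "fst z"] by auto
  then have 2: "\<bar>\<gamma> * cX (fst z)\<bar> \<le> \<gamma> * (Mx + 1)" using gpos by (simp add: abs_mult mult_left_mono)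
  show ?thesis using 1 2 by (simp add: f_def Bf_def abs_triangle_ineq4 order_trans[OF abs_triangle_ineq4])
qed

end

context sdde_ext begin

lemma cth_S2: "cth y \<in> {-r..T0}" using cth_S[of y] by auto

lemma gU_nonneg: "g\<^sub>U \<ge> 0" using g_bounds[of 0] gp[of 0] by linarith
lemma Lq_nonneg: "Lq \<ge> 0" unfolding Lq_def using Lv(1) K(1) v0pos vUpos by simp
lemma L_nonneg: "L \<ge> 0" unfolding L_def
  using Lq_nonneg Lg(1) Le(1) K(1) v0pos vUpos gU_nonneg bpos mupos gpos by simp
lemma Bf_nonneg: "Bf \<ge> 0" unfolding Bf_def using v0pos vUpos gU_nonneg bpos gpos Mx(1) by simp

lemma f_lip:
  assumes t: "T0 \<le> t" "t \<le> T0 + 1"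
  shows "norm (f t z1 - f t z2) \<le> L * norm (z1 - z2)"
proof -
  define D where "D = norm (z1 - z2)"
  have zz: "z1 - z2 = (fst z1 - fst z2, snd z1 - snd z2)" by (simp add: prod_eq_iff)
  have dX: "\<bar>fst z1 - fst z2\<bar> \<le> D"
    using norm_fst_le[of "fst z1 - fst z2" "snd z1 - snd z2"] zz by (simp add: D_def)
  have dT: "\<bar>snd z1 - snd z2\<bar> \<le> D"
    using norm_snd_le[of "snd z1 - snd z2" "fst z1 - fst z2"] zz by (simp add: D_def)
  have D0: "D \<ge> 0" by (simp add: D_def)
  define c1 c2 where "c1 = cth (snd z1)" and "c2 = cth (snd z2)"
  have dc: "\<bar>c1 - c2\<bar> \<le> D" using cth_lip[of "snd z1" "snd z2"] dT by (simp add: c1_def c2_def)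
  have cr: "c1 \<in> {\<alpha>1..\<alpha>2}" "c2 \<in> {\<alpha>1..\<alpha>2}" using cth_range by (auto simp: c1_def c2_def)
  define p1 p2 where "p1 = xe c1" and "p2 = xe c2"
  have dp: "\<bar>p1 - p2\<bar> \<le> K * D"
  proof -
    have "\<bar>p1 - p2\<bar> = \<bar>x c1 - x c2\<bar>" using xe_cth by (simp add: p1_def p2_def c1_def c2_def)
    also have "\<dots> \<le> K * \<bar>c1 - c2\<bar>" by (rule x_lip) (use cth_S in \<open>auto simp: c1_def c2_def\<close>)
    also have "\<dots> \<le> K * D" using dc K(1) by (rule mult_left_mono)
    finally show ?thesis .
  qed
  have pr: "p1 \<in> {-(Mx+1)..Mx+1}" "p2 \<in> {-(Mx+1)..Mx+1}" using xe_cth_range by (auto simp: p1_def p2_def c1_def c2_def)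
  define X1 X2 where "X1 = cX (fst z1)" and "X2 = cX (fst z2)"
  have dXc: "\<bar>X1 - X2\<bar> \<le> D" using cX_lip[of "fst z1" "fst z2"] dX by (simp add: X1_def X2_def)
  have Xr: "X1 \<in> {-(Mx+1)..Mx+1}" "X2 \<in> {-(Mx+1)..Mx+1}" using cX_range2 by (auto simp: X1_def X2_def)
  have dvX: "\<bar>v X1 - v X2\<bar> \<le> Lv * D"
    using Lv(2)[OF Xr] dXc Lv(1) by (meson mult_left_mono order_trans)
  have dvp: "\<bar>v p1 - v p2\<bar> \<le> Lv * (K * D)"
    using Lv(2)[OF pr] dp Lv(1) by (meson mult_left_mono order_trans)
  have q1: "qf z1 = v X1 / v p1" and q2: "qf z2 = v X2 / v p2"
    by (simp_all add: qf_def X1_def X2_def p1_def p2_def c1_def c2_def)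
  have dq: "\<bar>qf z1 - qf z2\<bar> \<le> Lq * D"
  proof -
    have "\<bar>qf z1 - qf z2\<bar> \<le> \<bar>v X1 - v X2\<bar>/v\<^sub>0 + v\<^sub>U* \<bar>v p1 - v p2\<bar>/(v\<^sub>0* v\<^sub>0)"
      unfolding q1 q2 by (rule quot_lip) (use v0pos vb vpos[of X2] in \<open>auto simp: abs_of_pos\<close>)
    also have "\<dots> \<le> (Lv*D)/v\<^sub>0 + v\<^sub>U*(Lv*(K*D))/(v\<^sub>0* v\<^sub>0)"
      by (intro add_mono divide_right_mono mult_left_mono dvX dvp) (use v0pos vUpos in auto)
    also have "\<dots> = Lq * D" by (simp add: Lq_def field_simps)
    finally show ?thesis .
  qed
  have E1: "Ef t z1 = exp (-\<mu> * (t - c1))" and E2: "Ef t z2 = exp (-\<mu> * (t - c2))"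
    by (simp_all add: Ef_def c1_def c2_def)
  have ar: "-\<mu> * (t - c1) \<in> {-(\<mu>*(T0+1-\<alpha>1))..0}" "-\<mu> * (t - c2) \<in> {-(\<mu>*(T0+1-\<alpha>1))..0}"
    using cr t alphas mupos by (auto intro!: mult_left_mono)
  have dE: "\<bar>Ef t z1 - Ef t z2\<bar> \<le> Le * (\<mu> * D)"
  proof -
    have "\<bar>Ef t z1 - Ef t z2\<bar> \<le> Le * \<bar>-\<mu> * (t - c1) - -\<mu> * (t - c2)\<bar>"
      unfolding E1 E2 by (rule Le(2)[OF ar])
    also have "\<bar>-\<mu> * (t - c1) - -\<mu> * (t - c2)\<bar> = \<mu> * \<bar>c1 - c2\<bar>"
    proof -
      have "-\<mu> * (t - c1) - -\<mu> * (t - c2) = \<mu> * (c1 - c2)" by (simp add: algebra_simps)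
      then show ?thesis using mupos by (simp add: abs_mult)
    qed
    also have "Le * (\<mu> * \<bar>c1 - c2\<bar>) \<le> Le * (\<mu> * D)"
      using dc Le(1) mupos by (intro mult_left_mono) auto
    finally show ?thesis .
  qed
  have G1: "Gf z1 = g p1" and G2: "Gf z2 = g p2" by (simp_all add: Gf_def p1_def p2_def c1_def c2_def)
  have dG: "\<bar>Gf z1 - Gf z2\<bar> \<le> Lg * (K * D)"
    unfolding G1 G2 using Lg(2)[OF pr] dp Lg(1) by (meson mult_left_mono order_trans)
  have bEq: "\<bar>Ef t z1 * qf z1\<bar> \<le> v\<^sub>U/v\<^sub>0"
  proof -
    have "\<bar>Ef t z1 * qf z1\<bar> \<le> 1 * (v\<^sub>U/v\<^sub>0)" unfolding abs_mult
      by (intro mult_mono Ef_bound qf_bound) (use t in auto)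
    then show ?thesis by simp
  qed
  have dEq: "\<bar>Ef t z1 * qf z1 - Ef t z2 * qf z2\<bar> \<le> 1 * (Lq * D) + (v\<^sub>U/v\<^sub>0) * (Le * (\<mu> * D))"
  proof -
    have "\<bar>Ef t z1 * qf z1 - Ef t z2 * qf z2\<bar> \<le> 1 * \<bar>qf z1 - qf z2\<bar> + (v\<^sub>U/v\<^sub>0) * \<bar>Ef t z1 - Ef t z2\<bar>"
      by (rule prod_lip[OF Ef_bound qf_bound]) (use t in auto)
    also have "\<dots> \<le> 1 * (Lq * D) + (v\<^sub>U/v\<^sub>0) * (Le * (\<mu> * D))"
      using dq dE v0pos vUpos by (intro add_mono mult_left_mono) auto
    finally show ?thesis .
  qed
  define C1 where "C1 = (v\<^sub>U/v\<^sub>0) * (Lg * K) + g\<^sub>U * (Lq + (v\<^sub>U/v\<^sub>0) * (Le * \<mu>))"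
  have dEqG: "\<bar>Ef t z1 * qf z1 * Gf z1 - Ef t z2 * qf z2 * Gf z2\<bar> \<le> C1 * D"
  proof -
    have "\<bar>Ef t z1 * qf z1 * Gf z1 - Ef t z2 * qf z2 * Gf z2\<bar>
        \<le> (v\<^sub>U/v\<^sub>0) * \<bar>Gf z1 - Gf z2\<bar> + g\<^sub>U * \<bar>Ef t z1 * qf z1 - Ef t z2 * qf z2\<bar>"
      by (rule prod_lip[OF bEq Gf_bound])
    also have "\<dots> \<le> (v\<^sub>U/v\<^sub>0) * (Lg * (K * D)) + g\<^sub>U * (1 * (Lq * D) + (v\<^sub>U/v\<^sub>0) * (Le * (\<mu> * D)))"
      using dG dEq v0pos vUpos gU_nonneg by (intro add_mono mult_left_mono) auto
    also have "\<dots> = C1 * D" by (simp add: C1_def algebra_simps)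
    finally show ?thesis .
  qed
  have df1: "\<bar>fst (f t z1) - fst (f t z2)\<bar> \<le> (\<beta> * C1 + \<gamma>) * D"
  proof -
    have "fst (f t z1) - fst (f t z2) = \<beta> * (Ef t z1 * qf z1 * Gf z1 - Ef t z2 * qf z2 * Gf z2) - \<gamma> * (X1 - X2)"
      by (simp add: f_def X1_def X2_def algebra_simps)
    then have "\<bar>fst (f t z1) - fst (f t z2)\<bar> \<le> \<beta> * \<bar>Ef t z1 * qf z1 * Gf z1 - Ef t z2 * qf z2 * Gf z2\<bar> + \<gamma> * \<bar>X1 - X2\<bar>"
      using bpos gpos by (simp add: abs_mult abs_triangle_ineq4 order_trans[OF abs_triangle_ineq4])
    also have "\<dots> \<le> \<beta> * (C1 * D) + \<gamma> * D"
      using dEqG dXc bpos gpos by (intro add_mono mult_left_mono) auto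
    finally show ?thesis by (simp add: algebra_simps)
  qed
  have df2: "\<bar>snd (f t z1) - snd (f t z2)\<bar> \<le> Lq * D" using dq by (simp add: f_def)
  have "norm (f t z1 - f t z2) \<le> \<bar>fst (f t z1) - fst (f t z2)\<bar> + \<bar>snd (f t z1) - snd (f t z2)\<bar>"
  proof -
    have eqp: "f t z1 - f t z2 = (fst (f t z1) - fst (f t z2), snd (f t z1) - snd (f t z2))"
      by (simp add: prod_eq_iff)
    show ?thesis unfolding eqp by (rule norm_pair_le)
  qed
  also have "\<dots> \<le> (\<beta> * C1 + \<gamma>) * D + Lq * D" using df1 df2 by (rule add_mono)
  also have "\<dots> = L * D" by (simp add: L_def C1_def algebra_simps)
  finally show ?thesis by (simp add: D_def)
qed

lemma f_cont: assumes "continuous_on A w" shows "continuous_on A (\<lambda>s. f s (w s))"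
proof -
  have c1: "continuous_on A (\<lambda>s. cth (snd (w s)))"
    by (rule continuous_on_compose2[OF cth_cont[of UNIV]]) (auto intro: continuous_intros assms)
  have c2: "continuous_on A (\<lambda>s. xe (cth (snd (w s))))"
    by (rule continuous_on_compose2[OF xe_cont c1]) (use cth_S2 in auto)
  have c3: "continuous_on A (\<lambda>s. cX (fst (w s)))"
    by (rule continuous_on_compose2[OF cX_cont[of UNIV]]) (auto intro: continuous_intros assms)
  have c4: "continuous_on A (\<lambda>s. v (xe (cth (snd (w s)))))" by (rule continuous_on_compose2[OF vcont c2]) auto
  have c5: "continuous_on A (\<lambda>s. v (cX (fst (w s))))" by (rule continuous_on_compose2[OF vcont c3]) auto
  have c6: "continuous_on A (\<lambda>s. g (xe (cth (snd (w s)))))" by (rule continuous_on_compose2[OF gcont c2]) auto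
  have cq: "continuous_on A (\<lambda>s. qf (w s))" unfolding qf_def
    by (intro continuous_on_divide c5 c4) (simp add: vpos less_imp_neq[OF vpos, symmetric])
  have cE: "continuous_on A (\<lambda>s. Ef s (w s))" unfolding Ef_def by (intro continuous_intros c1)
  have cG: "continuous_on A (\<lambda>s. Gf (w s))" unfolding Gf_def by (rule c6)
  show ?thesis unfolding f_def
    by (intro continuous_on_Pair continuous_intros cq cE cG c3)
qed

end

context sdde_ext begin

definition "h = min (min 1 (1/(2 * (L+1)))) (min (1/(Bf+1)) (min (a * v\<^sub>0/(2 * v\<^sub>U * v\<^sub>U)) ((r - a/v\<^sub>0)/2)))"

lemma h_props: "0 < h" "h \<le> 1" "h * L < 1" "h * Bf < 1" "(v\<^sub>U/v\<^sub>0) * h \<le> a/(2 * v\<^sub>U)" "h < r - a/v\<^sub>0"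
proof -
  have L0: "L \<ge> 0" by (rule L_nonneg)
  have B0: "Bf \<ge> 0" by (rule Bf_nonneg)
  have p3: "a * v\<^sub>0/(2 * v\<^sub>U * v\<^sub>U) > 0" using apos v0pos vUpos by simp
  have p4: "(r - a/v\<^sub>0)/2 > 0" using av0r by simp
  show "0 < h" unfolding h_def using L0 B0 p3 p4 by simp
  show "h \<le> 1" unfolding h_def by simp
  have "h \<le> 1/(2 * (L+1))" unfolding h_def by simp
  then have "h * L \<le> 1/(2 * (L+1)) * L" using L0 by (rule mult_right_mono)
  also have "\<dots> < 1" using L0 by (simp add: field_simps)
  finally show "h * L < 1" .
  have "h \<le> 1/(Bf+1)" unfolding h_def by simp
  then have "h * Bf \<le> 1/(Bf+1) * Bf" using B0 by (rule mult_right_mono)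
  also have "\<dots> < 1" using B0 by (simp add: field_simps)
  finally show "h * Bf < 1" .
  have "h \<le> a * v\<^sub>0/(2 * v\<^sub>U * v\<^sub>U)" unfolding h_def by simp
  then have "(v\<^sub>U/v\<^sub>0) * h \<le> (v\<^sub>U/v\<^sub>0) * (a * v\<^sub>0/(2 * v\<^sub>U * v\<^sub>U))"
    using v0pos vUpos by (intro mult_left_mono) auto
  also have "\<dots> = a/(2 * v\<^sub>U)" using v0pos vUpos by (simp add: field_simps)
  finally show "(v\<^sub>U/v\<^sub>0) * h \<le> a/(2 * v\<^sub>U)" .
  have "h \<le> (r - a/v\<^sub>0)/2" unfolding h_def
    by (rule min.coboundedI2, rule min.coboundedI2, rule min.coboundedI2, rule order_refl)
  moreover have "(r - a/v\<^sub>0)/2 < r - a/v\<^sub>0" using p4 by simp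
  ultimately show "h < r - a/v\<^sub>0" by (rule order_le_less_trans)
qed

abbreviation "I \<equiv> {T0..T0+h}"

lemma ex_u: "\<exists>u. u T0 = (x0, \<Theta>0) \<and> continuous_on I u \<and> (\<forall>t\<in>I. (u has_vector_derivative f t (u t)) (at t within I))"
proof -
  obtain u where "u T0 = (x0, \<Theta>0)" "continuous_on I u" "\<And>t. t \<in> I \<Longrightarrow> (u has_vector_derivative f t (u t)) (at t within I)"
  proof (rule ode_exist[of h L T0 f])
    show "0 < h" "0 \<le> L" "h * L < 1" using h_props L_nonneg by auto
    fix t z w assume "t \<in> {T0..T0+h}"
    then show "norm (f t z - f t w) \<le> L * norm (z - w)" using h_props by (intro f_lip) auto
  next
    fix w :: "real \<Rightarrow> real \<times> real" assume "continuous_on {T0..T0+h} w"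
    then show "continuous_on {T0..T0+h} (\<lambda>s. f s (w s))" by (rule f_cont)
  qed blast
  then show ?thesis by blast
qed

definition "u = (SOME u. u T0 = (x0, \<Theta>0) \<and> continuous_on I u \<and> (\<forall>t\<in>I. (u has_vector_derivative f t (u t)) (at t within I)))"
lemma u0: "u T0 = (x0, \<Theta>0)" and u_cont: "continuous_on I u"
  and u_der: "t \<in> I \<Longrightarrow> (u has_vector_derivative f t (u t)) (at t within I)"
  using someI_ex[OF ex_u] unfolding u_def[symmetric] by auto

definition "X t = fst (u t)"
definition "\<Theta> t = snd (u t)"

lemma X_der: "t \<in> I \<Longrightarrow> (X has_real_derivative fst (f t (u t))) (at t within I)"
  unfolding X_def[abs_def] by (rule vd_fst[OF u_der])
lemma Th_der: "t \<in> I \<Longrightarrow> (\<Theta> has_real_derivative qf (u t)) (at t within I)"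
  unfolding \<Theta>_def[abs_def] using vd_snd[OF u_der] by (simp add: f_def)

lemma X_range: assumes "t \<in> I" shows "X t \<in> {x0-1..x0+1}"
proof -
  have "(-Bf)*(t-T0) \<le> X t - X T0 \<and> X t - X T0 \<le> Bf*(t-T0)"
  proof (rule antideriv_bounds)
    show "T0 \<le> t" using assms by simp
    fix s assume s: "s \<in> {T0..t}"
    show "(X has_real_derivative fst (f s (u s))) (at s within {T0..t})"
      by (rule DERIV_subset[OF X_der]) (use s assms in auto)
    show "-Bf \<le> fst (f s (u s)) \<and> fst (f s (u s)) \<le> Bf" using f_bound[of s "u s"] s by auto
  qed
  moreover have "Bf*(t-T0) \<le> Bf * h" using assms Bf_nonneg by (intro mult_left_mono) auto
  moreover have "Bf * h < 1" using h_props by (simp add: mult.commute)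
  moreover have "X T0 = x0" by (simp add: X_def u0)
  ultimately show ?thesis by auto
qed

lemma Th_range: assumes "t \<in> I" shows "\<Theta> t \<in> {\<Theta>0..\<alpha>2}"
proof -
  have "(v\<^sub>0/v\<^sub>U)*(t-T0) \<le> \<Theta> t - \<Theta> T0 \<and> \<Theta> t - \<Theta> T0 \<le> (v\<^sub>U/v\<^sub>0)*(t-T0)"
  proof (rule antideriv_bounds)
    show "T0 \<le> t" using assms by simp
    fix s assume s: "s \<in> {T0..t}"
    show "(\<Theta> has_real_derivative qf (u s)) (at s within {T0..t})"
      by (rule DERIV_subset[OF Th_der]) (use s assms in auto)
    show "v\<^sub>0/v\<^sub>U \<le> qf (u s) \<and> qf (u s) \<le> v\<^sub>U/v\<^sub>0" by (rule qf_range)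
  qed
  moreover have "(v\<^sub>U/v\<^sub>0)*(t-T0) \<le> (v\<^sub>U/v\<^sub>0) * h" using assms v0pos vUpos by (intro mult_left_mono) auto
  moreover have "(v\<^sub>0/v\<^sub>U)*(t-T0) \<ge> 0" using assms v0pos vUpos by simp
  moreover have "\<Theta> T0 = \<Theta>0" by (simp add: \<Theta>_def u0)
  ultimately show ?thesis using h_props(5) Theta0_bounds alphas(4) by auto
qed

lemma Th_range2: "t \<in> I \<Longrightarrow> \<Theta> t \<in> {\<alpha>1..\<alpha>2}"
  using Th_range Theta0_bounds by (force simp: \<alpha>1_def)

lemma cX_X: "t \<in> I \<Longrightarrow> cX (X t) = X t" using X_range cX_id by blast
lemma cth_Th: "t \<in> I \<Longrightarrow> cth (\<Theta> t) = \<Theta> t" using Th_range2 cth_id by blast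

end

lemma deriv_transform:
  assumes "(f has_real_derivative D) (at x within s)" "x \<in> s" "\<And>y. y \<in> s \<Longrightarrow> g y = f y"
  shows "(g has_real_derivative D) (at x within s)"
  using has_vector_derivative_transform[OF assms(2,3)] assms(1)
  by (simp add: has_real_derivative_iff_has_vector_derivative)

context sdde_ext begin

definition "y t = (if t < T0 then x t else X t)"
definition "yd t = (if t < T0 then xd t else fst (f t (u t)))"
abbreviation "J \<equiv> {-r..T0+h}"

lemma hpos: "0 < h" using h_props by simp

lemma y_xe: "t \<in> {-r..T0} \<Longrightarrow> y t = xe t"
  by (cases "t < T0") (auto simp: y_def xe_eq X_def u0 x0_def)
lemma y_X: "t \<in> I \<Longrightarrow> y t = X t"
  by (auto simp: y_def X_def u0 x0_def)
lemma y_x: "t \<in> S \<Longrightarrow> y t = x t" by (simp add: y_def)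

lemma u_eq: "u t = (X t, \<Theta> t)" by (simp add: X_def \<Theta>_def)

lemma H_f: "H T0 = fst (f T0 (u T0))"
proof -
  have T0I: "T0 \<in> I" using hpos by simp
  have a1: "cX x0 = x0" by (rule cX_id) simp
  have a2: "cth \<Theta>0 = \<Theta>0" using cth_Th[OF T0I] by (simp add: \<Theta>_def u0)
  show ?thesis unfolding H_def f_def Ef_def qf_def Gf_def u0
    by (simp add: a1 a2 \<Theta>0_def[symmetric] x0_def[symmetric] mult.assoc)
qed

lemma y_der: assumes t: "t \<in> {-r..<T0+h}" shows "(y has_real_derivative yd t) (at t within J)"
proof -
  consider "t < T0" | "t = T0" | "T0 < t" by linarith
  then show ?thesis
  proof cases
    case 1
    have "at t within J = at t within S"
      by (rule at_within_nhd[where S="{..<T0}"]) (use 1 hpos in auto)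
    moreover have "(y has_real_derivative xd t) (at t within S)"
      by (rule deriv_transform[OF xd_der]) (use 1 t y_x in auto)
    ultimately show ?thesis using 1 by (simp add: yd_def)
  next
    case 2
    have T1: "0 < T1" "T1 < T0" using T0pos by (auto simp: T1_def)
    have l: "(y has_real_derivative H T0) (at T0 within {T1..T0})"
      by (rule deriv_transform[OF xe_left_der]) (use T1 y_xe rpos in auto)
    have r: "(y has_real_derivative fst (f T0 (u T0))) (at T0 within I)"
      by (rule deriv_transform[OF X_der]) (use hpos y_X in auto)
    have "(y has_real_derivative fst (f T0 (u T0))) (at T0 within ({T1..T0} \<union> I))"
      using deriv_union[OF l[unfolded H_f] r] .
    moreover have "{T1..T0} \<union> I = {T1..T0+h}" using T1 hpos by auto
    moreover have "at T0 within J = at T0 within {T1..T0+h}"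
      by (rule at_within_nhd[where S="{T1<..}"]) (use T1 hpos rpos in auto)
    ultimately show ?thesis using 2 by (simp add: yd_def)
  next
    case 3
    have "at t within J = at t within I"
      by (rule at_within_nhd[where S="{T0<..}"]) (use 3 hpos rpos T0pos in auto)
    moreover have "(y has_real_derivative fst (f t (u t))) (at t within I)"
      by (rule deriv_transform[OF X_der]) (use 3 t y_X in auto)
    ultimately show ?thesis using 3 by (simp add: yd_def)
  qed
qed

lemma yd_cont: "continuous_on J yd"
proof -
  have T1: "0 < T1" "T1 < T0" using T0pos by (auto simp: T1_def)
  have c1: "continuous_on {-r..T1} yd"
  proof (rule continuous_on_eq[OF continuous_on_subset[OF xd_cont]])
    show "\<And>t. t \<in> {-r..T1} \<Longrightarrow> xd t = yd t" using T1 by (simp add: yd_def)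
    show "{-r..T1} \<subseteq> S" using T1 by auto
  qed
  have c2: "continuous_on {T1..T0} yd"
  proof (rule continuous_on_eq[OF continuous_on_subset[OF H_cont]])
    fix t assume t: "t \<in> {T1..T0}"
    show "H t = yd t"
    proof (cases "t < T0")
      case True then show ?thesis using xd_H[of t] t T1 by (simp add: yd_def)
    next
      case False then have "t = T0" using t by simp
      then show ?thesis using H_f by (simp add: yd_def)
    qed
  next
    show "{T1..T0} \<subseteq> {0..T0}" using T1 by auto
  qed
  have c3: "continuous_on I yd"
  proof (rule continuous_on_eq[OF continuous_on_fst[OF f_cont[OF u_cont]]])
    show "\<And>t. t \<in> I \<Longrightarrow> fst (f t (u t)) = yd t" by (simp add: yd_def)
  qed
  have "continuous_on ({-r..T1} \<union> {T1..T0} \<union> I) yd"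
    by (intro continuous_on_closed_Un c1 c2 c3) auto
  moreover have "{-r..T1} \<union> {T1..T0} \<union> I = J" using T1 hpos rpos by auto
  ultimately show ?thesis by simp
qed

lemma y_cont: "continuous_on J y"
proof -
  have c1: "continuous_on {-r..T0} y"
    by (rule continuous_on_eq[OF xe_cont]) (simp add: y_xe)
  have c2: "continuous_on I y"
    by (rule continuous_on_eq[OF continuous_on_fst[OF u_cont]]) (simp add: y_X X_def)
  have "continuous_on ({-r..T0} \<union> I) y" by (intro continuous_on_closed_Un c1 c2) auto
  moreover have "{-r..T0} \<union> I = J" using hpos rpos T0pos by auto
  ultimately show ?thesis by simp
qed

definition "Vy s = integral {-r..s} (\<lambda>\<tau>. v (y \<tau>))"

lemma Vy_der: "s \<in> J \<Longrightarrow> (Vy has_real_derivative v (y s)) (at s within J)"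
  unfolding Vy_def[abs_def]
  by (rule integral_has_real_derivative) (auto intro: continuous_on_compose2[OF vcont y_cont])

lemma Vy_V: "s \<in> {-r..T0} \<Longrightarrow> Vy s = V s"
  unfolding Vy_def V_def by (rule integral_cong) (simp add: y_xe)

lemma Th_lt: "t \<in> I \<Longrightarrow> \<Theta> t < T0" using Th_range2[of t] alphas by auto
lemma Th_J: "t \<in> I \<Longrightarrow> \<Theta> t \<in> J" using Th_range2[of t] alphas hpos by auto

lemma Vy_Th: assumes t: "t \<in> I" shows "Vy t - Vy (\<Theta> t) = a"
proof -
  have k0: "(\<lambda>s. Vy s - Vy (\<Theta> s)) T0 = a"
  proof -
    have "\<Theta> T0 = \<Theta>0" by (simp add: \<Theta>_def u0)
    moreover have "\<Theta>0 \<in> {-r..T0}" using Th_range2[of T0] alphas hpos by (auto simp: \<Theta>_def u0)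
    ultimately show ?thesis using Vy_V[of T0] Vy_V[of \<Theta>0] Theta0_V rT0 by auto
  qed
  have "0*(t-T0) \<le> (\<lambda>s. Vy s - Vy (\<Theta> s)) t - (\<lambda>s. Vy s - Vy (\<Theta> s)) T0 \<and>
        (\<lambda>s. Vy s - Vy (\<Theta> s)) t - (\<lambda>s. Vy s - Vy (\<Theta> s)) T0 \<le> 0*(t-T0)"
  proof (rule antideriv_bounds[where w="\<lambda>_. 0"])
    show "T0 \<le> t" using t by simp
    fix s assume s: "s \<in> {T0..t}"
    then have sI: "s \<in> I" using t by auto
    have d1: "(Vy has_real_derivative v (y s)) (at s within I)"
      by (rule DERIV_subset[OF Vy_der]) (use sI rpos T0pos in auto)
    have dT: "(\<Theta> has_vector_derivative qf (u s)) (at s within I)"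
      using Th_der[OF sI] by (simp add: has_real_derivative_iff_has_vector_derivative)
    have dV2: "(Vy has_vector_derivative v (y (\<Theta> s))) (at (\<Theta> s) within \<Theta> ` I)"
      unfolding has_real_derivative_iff_has_vector_derivative[symmetric]
      by (rule DERIV_subset[OF Vy_der[OF Th_J[OF sI]]]) (use Th_J in auto)
    have d2: "((\<lambda>s. Vy (\<Theta> s)) has_real_derivative qf (u s) * v (y (\<Theta> s))) (at s within I)"
      using vector_diff_chain_within[OF dT dV2]
      by (simp add: has_real_derivative_iff_has_vector_derivative o_def)
    have val: "qf (u s) * v (y (\<Theta> s)) = v (y s)"
    proof -
      have "y (\<Theta> s) = xe (\<Theta> s)" using Th_J[OF sI] Th_lt[OF sI] by (intro y_xe) auto
      moreover have "qf (u s) = v (X s) / v (xe (\<Theta> s))"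
        by (simp add: qf_def u_eq cX_X[OF sI] cth_Th[OF sI])
      moreover have "y s = X s" by (rule y_X[OF sI])
      ultimately show ?thesis using vpos[of "xe (\<Theta> s)"] by simp
    qed
    have "((\<lambda>s. Vy s - Vy (\<Theta> s)) has_real_derivative 0) (at s within I)"
      using DERIV_diff[OF d1 d2] val by simp
    then show "((\<lambda>s. Vy s - Vy (\<Theta> s)) has_real_derivative 0) (at s within {T0..t})"
      by (rule DERIV_subset) (use t in auto)
  qed simp
  then show ?thesis using k0 by simp
qed

lemma delay_y: assumes t: "t \<in> {T0..<T0+h}" shows "delay v a r (\<lambda>s. y (t+s)) = t - \<Theta> t"
proof (rule delay_unique[where V=Vy])
  have tI: "t \<in> I" using t by auto
  fix s assume s: "s \<in> {t-r..t}"
  show "(Vy has_real_derivative v (y s)) (at s within {t-r..t})"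
    by (rule DERIV_subset[OF Vy_der]) (use s t T0pos in auto)
next
  have tI: "t \<in> I" using t by auto
  show "0 < t - \<Theta> t" using Th_lt[OF tI] t by auto
  have "\<Theta> t \<ge> \<alpha>1" using Th_range2[OF tI] by auto
  then show "t - \<Theta> t < r" using t h_props(6) by (auto simp: \<alpha>1_def)
  show "Vy t - Vy (t - (t - \<Theta> t)) = a" using Vy_Th[OF tI] by simp
qed

end

context sdde_ext begin

lemma y_eq: assumes t: "0 < t" "t < T0 + h"
  shows "(y has_real_derivative Gfun \<beta> \<mu> \<gamma> a g v r (\<lambda>s. y (t+s))) (at t)"
proof -
  have "at t within J = at t" by (rule at_within_interior) (use t rpos in auto)
  then have d: "(y has_real_derivative yd t) (at t)" using y_der[of t] t rpos by auto
  have "yd t = Gfun \<beta> \<mu> \<gamma> a g v r (\<lambda>s. y (t+s))"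
  proof (cases "t < T0")
    case True
    have dp: "let d = delay v a r (\<lambda>s. x (t+s)) in 0 < d \<and> d < r \<and> a/v\<^sub>U \<le> d \<and> d \<le> a/v\<^sub>0 \<and> V t - V (t-d) = a"
      using delay_props[OF dV_seg[of t]] t True by (simp add: Let_def)
    have "Gfun \<beta> \<mu> \<gamma> a g v r (\<lambda>s. x (t+s)) = Gfun \<beta> \<mu> \<gamma> a g v r (\<lambda>s. y (t+s))"
    proof (rule Gfun_cong)
      fix s assume s: "s \<in> {-r..0}"
      show "x (t+s) = y (t+s)" using s t True by (intro y_x[symmetric]) auto
    qed (use dp in \<open>auto simp: Let_def\<close>)
    moreover have "yd t = Gfun \<beta> \<mu> \<gamma> a g v r (\<lambda>s. x (t+s))"
      using True xd_eq[of t] t by (simp add: yd_def Gfun_Pf)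
    ultimately show ?thesis by simp
  next
    case False
    have tI: "t \<in> I" using False t by auto
    have tI': "t \<in> {T0..<T0+h}" using False t by auto
    have a1: "y (t + 0) = X t" using y_X[OF tI] by simp
    have a2: "y (t + - (t - \<Theta> t)) = xe (\<Theta> t)"
      using y_xe[of "\<Theta> t"] Th_J[OF tI] Th_lt[OF tI] by auto
    show ?thesis
      unfolding Gfun_Pf Pf_def Let_def delay_y[OF tI'] a1 a2
      using False by (simp add: yd_def f_def Ef_def qf_def Gf_def u_eq cX_X[OF tI] cth_Th[OF tI] mult.assoc)
  qed
  with d show ?thesis by simp
qed

lemma y_sol: "is_sol \<beta> \<mu> \<gamma> a g v r \<phi> (ereal (T0+h)) y"
  unfolding is_sol_def
proof (intro conjI allI impI)
  show "0 < ereal (T0 + h)" using T0pos hpos by simp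
  have set: "{s. -r \<le> s \<and> ereal s < ereal (T0 + h)} = {-r..<T0+h}" by auto
  show "\<exists>x'. (\<forall>t\<in>{s. - r \<le> s \<and> ereal s < ereal (T0 + h)}.
          (y has_real_derivative x' t) (at t within {s. - r \<le> s \<and> ereal s < ereal (T0 + h)})) \<and>
          continuous_on {s. - r \<le> s \<and> ereal s < ereal (T0 + h)} x'"
    unfolding set
  proof (intro exI[of _ yd] conjI ballI)
    fix t assume "t \<in> {-r..<T0+h}"
    then show "(y has_real_derivative yd t) (at t within {-r..<T0+h})"
      by (intro DERIV_subset[OF y_der]) auto
  next
    show "continuous_on {-r..<T0+h} yd" by (rule continuous_on_subset[OF yd_cont]) auto
  qed
  show "\<forall>s\<in>{- r..0}. y s = \<phi> s"
  proof
    fix s assume s: "s \<in> {-r..0}"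
    then have "y s = x s" using T0pos by (intro y_x) auto
    moreover have "x s = \<phi> s" using sol s unfolding is_sol_def by blast
    ultimately show "y s = \<phi> s" by simp
  qed
next
  fix t assume "0 < t \<and> ereal t < ereal (T0 + h)"
  then show "(y has_real_derivative Gfun \<beta> \<mu> \<gamma> a g v r (\<lambda>s. y (t + s))) (at t)"
    by (intro y_eq) auto
qed

lemma extension: "\<exists>T' y'. ereal T0 < T' \<and> is_sol \<beta> \<mu> \<gamma> a g v r \<phi> T' y' \<and>
    (\<forall>t. -r \<le> t \<and> ereal t < ereal T0 \<longrightarrow> y' t = x t)"
  using y_sol hpos by (intro exI[of _ "ereal (T0+h)"] exI[of _ y]) (auto simp: y_def)

end

context sdde begin

lemma no_finite:
  assumes ms: "max_sol \<beta> \<mu> \<gamma> a g v r \<phi> T x"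
  shows "T = \<infinity>"
proof (rule ccontr)
  assume ne: "T \<noteq> \<infinity>"
  have sol: "is_sol \<beta> \<mu> \<gamma> a g v r \<phi> T x" using ms by (simp add: max_sol_def)
  have "0 < T" using sol by (simp add: is_sol_def)
  then obtain T0 where T0: "T = ereal T0" using ne by (cases T) auto
  interpret E: sdde_ext \<beta> \<mu> \<gamma> a r v\<^sub>0 v\<^sub>U g g' v v' \<phi> x T0
    by (rule sdde_ext.intro[OF sdde_axioms]) (simp add: sdde_ext_axioms_def sol[unfolded T0])
  from E.extension show False using ms T0 by (auto simp: max_sol_def)
qed

lemma dL_expr: "dL = \<beta> * (v\<^sub>0 / v\<^sub>U) * exp (-\<mu> * a / v\<^sub>0) * Inf (range g)"
  by (simp add: dL_def g\<^sub>0_def)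
lemma dU_expr: "dU = \<beta> * Sup (range g) * (v\<^sub>U / v\<^sub>0)"
  by (simp add: dU_def g\<^sub>U_def)

lemma main:
  "\<forall>\<phi> T x. \<phi> \<in> XG \<beta> \<mu> \<gamma> a g v r \<and> max_sol \<beta> \<mu> \<gamma> a g v r \<phi> T x \<longrightarrow>
       T = \<infinity> \<and>
       (\<forall>N. (\<exists>U. open U \<and> {dL/\<gamma> .. dU/\<gamma>} \<subseteq> U \<and> U \<subseteq> N) \<longrightarrow>
              (\<exists>t0\<ge>0. \<forall>t\<ge>t0. x t \<in> N)) \<and>
       ((\<forall>s\<in>{-r..0}. \<phi> s \<in> {dL/\<gamma> .. dU/\<gamma>}) \<longrightarrow> (\<forall>t\<ge>0. x t \<in> {dL/\<gamma> .. dU/\<gamma>})) \<and>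
       ((\<forall>s\<in>{-r..0}. \<phi> s > 0) \<longrightarrow> (\<forall>t\<ge>-r. x t > 0))"
proof (intro allI impI)
  fix \<phi> T x
  assume "\<phi> \<in> XG \<beta> \<mu> \<gamma> a g v r \<and> max_sol \<beta> \<mu> \<gamma> a g v r \<phi> T x"
  then have ms: "max_sol \<beta> \<mu> \<gamma> a g v r \<phi> T x" by simp
  have Tinf: "T = \<infinity>" by (rule no_finite[OF ms])
  have sol: "is_sol \<beta> \<mu> \<gamma> a g v r \<phi> \<infinity> x" using ms Tinf by (simp add: max_sol_def)
  have x\<phi>: "x s = \<phi> s" if "s \<in> {-r..0}" for s using sol that unfolding is_sol_def by blast
  define A where "A = dL/\<gamma>"
  define B where "B = dU/\<gamma>"
  have AB: "0 < A" "A \<le> B" using dLpos dLU gpos by (auto simp: A_def B_def divide_right_mono)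
  have F: "A*(exp(\<gamma>*t)-1) \<le> exp(\<gamma>*t)*x t - x 0 \<and> exp(\<gamma>*t)*x t - x 0 \<le> B*(exp(\<gamma>*t)-1)"
    if "t \<ge> 0" for t
    using formula[OF sol that] by (simp add: A_def B_def)
  have up: "x t - B \<le> (x 0 - B) / exp(\<gamma>*t)" if "t \<ge> 0" for t
  proof -
    have "exp(\<gamma>*t) * (x t - B) \<le> x 0 - B" using F[OF that] by (simp add: algebra_simps)
    then show ?thesis by (simp add: field_simps mult.commute)
  qed
  have lo: "(A - x 0) / exp(\<gamma>*t) \<ge> A - x t" if "t \<ge> 0" for t
  proof -
    have "exp(\<gamma>*t) * (A - x t) \<le> A - x 0" using F[OF that] by (simp add: algebra_simps)
    then show ?thesis by (simp add: field_simps mult.commute)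
  qed
  show "T = \<infinity> \<and>
       (\<forall>N. (\<exists>U. open U \<and> {dL/\<gamma> .. dU/\<gamma>} \<subseteq> U \<and> U \<subseteq> N) \<longrightarrow>
              (\<exists>t0\<ge>0. \<forall>t\<ge>t0. x t \<in> N)) \<and>
       ((\<forall>s\<in>{-r..0}. \<phi> s \<in> {dL/\<gamma> .. dU/\<gamma>}) \<longrightarrow> (\<forall>t\<ge>0. x t \<in> {dL/\<gamma> .. dU/\<gamma>})) \<and>
       ((\<forall>s\<in>{-r..0}. \<phi> s > 0) \<longrightarrow> (\<forall>t\<ge>-r. x t > 0))"
    unfolding A_def[symmetric] B_def[symmetric]
  proof (intro conjI allI impI)
    show "T = \<infinity>" by (rule Tinf)
  next
    fix N assume "\<exists>U. open U \<and> {A..B} \<subseteq> U \<and> U \<subseteq> N"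
    then obtain U where U: "open U" "{A..B} \<subseteq> U" "U \<subseteq> N" by blast
    have AU: "A \<in> U" and BU: "B \<in> U" using U(2) AB by auto
    obtain e1 where e1: "e1 > 0" "ball A e1 \<subseteq> U" using U(1) AU unfolding open_contains_ball by blast
    obtain e2 where e2: "e2 > 0" "ball B e2 \<subseteq> U" using U(1) BU unfolding open_contains_ball by blast
    define \<epsilon> where "\<epsilon> = min e1 e2 / 2"
    have \<epsilon>: "\<epsilon> > 0" using e1 e2 by (simp add: \<epsilon>_def)
    have thick: "z \<in> U" if "A - \<epsilon> \<le> z" "z \<le> B + \<epsilon>" for z
    proof -
      consider "z < A" | "A \<le> z \<and> z \<le> B" | "B < z" by linarith
      then show ?thesis
      proof cases
        case 1 then have "z \<in> ball A e1" using that e1 e2 by (auto simp: \<epsilon>_def dist_real_def)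
        then show ?thesis using e1 by auto
      next
        case 2 then show ?thesis using U by auto
      next
        case 3 then have "z \<in> ball B e2" using that e1 e2 by (auto simp: \<epsilon>_def dist_real_def)
        then show ?thesis using e2 by auto
      qed
    qed
    define C where "C = \<bar>x 0\<bar> + \<bar>A\<bar> + \<bar>B\<bar>"
    define t0 where "t0 = ln (C/\<epsilon> + 1) / \<gamma>"
    have C0: "C \<ge> 0" by (simp add: C_def)
    have Ce: "0 < C/\<epsilon> + 1"
    proof -
      have "C/\<epsilon> \<ge> 0" using C0 \<epsilon> by simp
      then show ?thesis by linarith
    qed
    have t00: "t0 \<ge> 0" using C0 \<epsilon> gpos by (simp add: t0_def)
    show "\<exists>t0\<ge>0. \<forall>t\<ge>t0. x t \<in> N"
    proof (intro exI[of _ t0] conjI allI impI t00)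
      fix t assume t: "t0 \<le> t"
      then have tt: "t \<ge> 0" using t00 by simp
      have "exp(\<gamma>*t0) = C/\<epsilon> + 1" using Ce gpos by (simp add: t0_def)
      moreover have "exp(\<gamma>*t0) \<le> exp(\<gamma>*t)" using t gpos by simp
      ultimately have E: "C/\<epsilon> < exp(\<gamma>*t)" by simp
      have CE: "C / exp(\<gamma>*t) < \<epsilon>"
        using E \<epsilon> by (simp add: field_simps)
      have "(x 0 - B) / exp(\<gamma>*t) \<le> C / exp(\<gamma>*t)"
        by (intro divide_right_mono) (auto simp: C_def)
      then have "x t \<le> B + \<epsilon>" using up[OF tt] CE by linarith
      moreover have "(A - x 0) / exp(\<gamma>*t) \<le> C / exp(\<gamma>*t)"
        by (intro divide_right_mono) (auto simp: C_def)
      then have "A - \<epsilon> \<le> x t" using lo[OF tt] CE by linarith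
      ultimately show "x t \<in> N" using thick U by auto
    qed
  next
    assume inQ: "\<forall>s\<in>{-r..0}. \<phi> s \<in> {A..B}"
    fix t :: real assume t: "0 \<le> t"
    have x0Q: "x 0 \<in> {A..B}" using inQ x\<phi>[of 0] rpos by auto
    have "(x 0 - B) / exp(\<gamma>*t) \<le> 0" using x0Q by (intro divide_nonpos_pos) auto
    then have "x t - B \<le> 0" using up[OF t] by linarith
    moreover have "(A - x 0) / exp(\<gamma>*t) \<le> 0" using x0Q by (intro divide_nonpos_pos) auto
    then have "A - x t \<le> 0" using lo[OF t] by linarith
    ultimately show "x t \<in> {A..B}" by simp
  next
    assume pos: "\<forall>s\<in>{-r..0}. \<phi> s > 0"
    fix t :: real assume t: "-r \<le> t"
    show "x t > 0"
    proof (cases "t \<le> 0")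
      case True then show ?thesis using pos x\<phi>[of t] t by auto
    next
      case False
      have "x 0 > 0" using pos x\<phi>[of 0] rpos by auto
      have "exp(\<gamma>*t)*x t \<ge> x 0 + A*(exp(\<gamma>*t)-1)" using F[of t] False by simp
      moreover have "A*(exp(\<gamma>*t)-1) \<ge> 0" using AB False gpos by simp
      ultimately have "exp(\<gamma>*t)*x t > 0" using \<open>x 0 > 0\<close> by linarith
      then show ?thesis by (simp add: zero_less_mult_iff)
    qed
  qed
qed

end

theorem proposition3p2:
  fixes \<beta> \<mu> \<gamma> a r v\<^sub>0 v\<^sub>U :: real and g g' v v' :: "real \<Rightarrow> real"
  assumes "\<beta> > 0" and "\<mu> > 0" and "\<gamma> > 0" and "a > 0"
    and "\<And>y. (g has_real_derivative g' y) (at y)" and "continuous_on UNIV g'"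
    and "\<And>y. g y > 0" and "bdd_above (range g)" and "Inf (range g) > 0"
    and "\<And>y. (v has_real_derivative v' y) (at y)" and "continuous_on UNIV v'"
    and "v\<^sub>0 > 0" and "\<And>y. v\<^sub>0 \<le> v y \<and> v y \<le> v\<^sub>U"
    and "r > a / v\<^sub>0"
  defines "dL \<equiv> \<beta> * (v\<^sub>0 / v\<^sub>U) * exp (-\<mu> * a / v\<^sub>0) * Inf (range g)"
    and "dU \<equiv> \<beta> * Sup (range g) * (v\<^sub>U / v\<^sub>0)"
  defines "Q \<equiv> {dL / \<gamma> .. dU / \<gamma>}"
  shows
    "\<forall>\<phi> T x. \<phi> \<in> XG \<beta> \<mu> \<gamma> a g v r \<and> max_sol \<beta> \<mu> \<gamma> a g v r \<phi> T x \<longrightarrow>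
       T = \<infinity> \<and>
       (\<forall>N. (\<exists>U. open U \<and> Q \<subseteq> U \<and> U \<subseteq> N) \<longrightarrow>
              (\<exists>t0\<ge>0. \<forall>t\<ge>t0. x t \<in> N)) \<and>
       ((\<forall>s\<in>{-r..0}. \<phi> s \<in> Q) \<longrightarrow> (\<forall>t\<ge>0. x t \<in> Q)) \<and>
       ((\<forall>s\<in>{-r..0}. \<phi> s > 0) \<longrightarrow> (\<forall>t\<ge>-r. x t > 0))"
proof -
  interpret S: sdde \<beta> \<mu> \<gamma> a r v\<^sub>0 v\<^sub>U g g' v v'
    by (rule sdde.intro) (fact assms)+
  show ?thesis
    using S.main[unfolded S.dL_expr S.dU_expr] unfolding Q_def dL_def dU_def .
qed

end
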